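(* If $F$ is an apexed $\ell$-frame and $u,v\in V(F)$, then some hole of $F$ contains both $u$ and $v$.
   Context: A hole is an induced cycle of length at least four. A threshold graph is a graph with no induced four-vertex path, four-vertex cycle, or complement of a four-vertex cycle. $\ell$-frame for odd $\ell\ge5$: let $k\ge3$ and let $a_1,\dots,a_k,b_1,\dots,b_k$ be distinct vertices; for $1\le i\le k$ let $P_i$ be a path of length $(\ell-3)/2$ with ends $a_i,b_i$, pairwise vertex-disjoint. Let $A,B$ be graphs on $\{a_1,\dots,a_k\}$ and $\{b_1,\dots,b_k\}$ that are threshold graphs, with $b_ib_j$ an edge iff $a_ia_j$ is not an edge ($i<j$), each of $A,B$ either disconnected or two-connected. The $\ell$-frame is the union $A\cup B\cup P_1\cup\dots\cup P_k$ (no other edges). Exactly one of $A,B$ is disconnected; the apexed $\ell$-frame is obtained by adding a new vertex (the apex) adjacent exactly to all vertices of the disconnected one. $\ell$-frame for even $\ell\ge6$: let $m\ge0$, $n\ge2$, $m+n\ge3$, and let $a_1,\dots,a_n,c_1,\dots,c_m,b_1,\dots,b_n,d_1,\dots,d_m$ be distinct. $P_i$ ($1\le i\le n$) is a path of length $\ell/2-2$ between $a_i,b_i$; $Q_i$ ($1\le i\le m$) is a path of length $\ell/2-1$ between $c_i,d_i$; all pairwise vertex-disjoint. $A$ on $\{a_i\}\cup\{c_j\}$ and $B$ on $\{b_i\}\cup\{d_j\}$: $\{c_j\}$ and $\{d_j\}$ are cliques; $\{a_i\}$, $\{b_i\}$ are stable; the bipartite graph of $A$ between $\{a_i\}$ and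 $\{c_j\}$ has no induced two-edge matching; $b_id_j$ is an edge iff $a_ic_j$ is not; some $a_i$ has degree zero in $A$ and some $b_i$ has degree zero in $B$; no other edges. The $\ell$-frame is $A\cup B\cup P_1\cup\dots\cup P_n\cup Q_1\cup\dots\cup Q_m$. The apexed $\ell$-frame is obtained by adding two new vertices, one adjacent exactly to all vertices of $A$ and one adjacent exactly to all vertices of $B$. *)

theory Defs
  imports Main
begin

text \<open>Graphs are given by a vertex set V and an edge relation E on the vertex type.
Auxiliary graphs A, B of a frame are encoded as relations on the index set.\<close>

definition is_hole :: "'a set \<Rightarrow> ('a \<Rightarrow> 'a \<Rightarrow> bool) \<Rightarrow> 'a list \<Rightarrow> bool" where
  "is_hole V E cs \<longleftrightarrow> 4 \<le> length cs \<and> distinct cs \<and> set cs \<subseteq> V \<and>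
     (\<forall>i < length cs. \<forall>j < length cs.
        E (cs ! i) (cs ! j) \<longleftrightarrow> (j = Suc i mod length cs \<or> i = Suc j mod length cs))"

definition threshold_on :: "'i set \<Rightarrow> ('i \<Rightarrow> 'i \<Rightarrow> bool) \<Rightarrow> bool" where
  "threshold_on I R \<longleftrightarrow>
     (\<forall>a\<in>I. \<forall>b\<in>I. \<forall>c\<in>I. \<forall>d\<in>I. distinct [a, b, c, d] \<longrightarrow>
        \<not> (R a b \<and> R b c \<and> R c d \<and> \<not> R a c \<and> \<not> R b d \<and> \<not> R a d) \<and>
        \<not> (R a b \<and> R b c \<and> R c d \<and> R d a \<and> \<not> R a c \<and> \<not> R b d) \<and>
        \<not> (R a b \<and> R c d \<and> \<not> R a c \<and> \<not> R a d \<and> \<not> R b c \<and> \<not> R b d))"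

definition connected_on :: "'i set \<Rightarrow> ('i \<Rightarrow> 'i \<Rightarrow> bool) \<Rightarrow> bool" where
  "connected_on I R \<longleftrightarrow> (\<forall>x\<in>I. \<forall>y\<in>I. (x, y) \<in> {(p, q). p \<in> I \<and> q \<in> I \<and> R p q}\<^sup>*)"

definition two_connected_on :: "'i set \<Rightarrow> ('i \<Rightarrow> 'i \<Rightarrow> bool) \<Rightarrow> bool" where
  "two_connected_on I R \<longleftrightarrow> finite I \<and> 3 \<le> card I \<and> connected_on I R \<and>
     (\<forall>v\<in>I. connected_on (I - {v}) R)"

definition path_edge :: "'a list \<Rightarrow> 'a \<Rightarrow> 'a \<Rightarrow> bool" where
  "path_edge P x y \<longleftrightarrow> (\<exists>j. Suc j < length P \<and>
     ((x = P ! j \<and> y = P ! Suc j) \<or> (y = P ! j \<and> x = P ! Suc j)))"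

text \<open>Odd case: path i has vertex list P i from a_i = hd (P i) to b_i = last (P i);
RA i j means a_i a_j is an edge of A; B has b_i b_j iff not RA i j (i \<noteq> j).\<close>

definition odd_apexed_frame :: "nat \<Rightarrow> 'a set \<Rightarrow> ('a \<Rightarrow> 'a \<Rightarrow> bool) \<Rightarrow> bool" where
  "odd_apexed_frame l V E \<longleftrightarrow> odd l \<and> 5 \<le> l \<and>
    (\<exists>(k::nat) (P :: nat \<Rightarrow> 'a list) (RA :: nat \<Rightarrow> nat \<Rightarrow> bool) (RB :: nat \<Rightarrow> nat \<Rightarrow> bool) z.
       3 \<le> k \<and>
       (\<forall>i<k. length (P i) = (l - 3) div 2 + 1) \<and>
       distinct (concat (map P [0..<k]) @ [z]) \<and>
       (\<forall>i j. RA i j \<longrightarrow> i < k \<and> j < k \<and> i \<noteq> j) \<and>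
       (\<forall>i j. RA i j \<longrightarrow> RA j i) \<and>
       (\<forall>i j. RB i j \<longleftrightarrow> i < k \<and> j < k \<and> i \<noteq> j \<and> \<not> RA i j) \<and>
       threshold_on {..<k} RA \<and> threshold_on {..<k} RB \<and>
       (\<not> connected_on {..<k} RA \<or> two_connected_on {..<k} RA) \<and>
       (\<not> connected_on {..<k} RB \<or> two_connected_on {..<k} RB) \<and>
       V = insert z (\<Union>i<k. set (P i)) \<and>
       (\<forall>x y. E x y \<longleftrightarrow>
          (\<exists>i<k. path_edge (P i) x y) \<or>
          (\<exists>i<k. \<exists>j<k. RA i j \<and> x = hd (P i) \<and> y = hd (P j)) \<or>
          (\<exists>i<k. \<exists>j<k. RB i j \<and> x = last (P i) \<and> y = last (P j)) \<or>
          (\<exists>w. ((x = z \<and> y = w) \<or> (y = z \<and> x = w)) \<and>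
             ((\<not> connected_on {..<k} RA \<and> (\<exists>i<k. w = hd (P i))) \<or>
              (\<not> connected_on {..<k} RB \<and> (\<exists>i<k. w = last (P i)))))))"

text \<open>Even case: P i (i < n) from a_i = hd (P i) to b_i = last (P i), length l/2-2;
Q j (j < m) from c_j = hd (Q j) to d_j = last (Q j), length l/2-1;
R i j means a_i c_j is an edge of A; b_i d_j is an edge of B iff not R i j.
za is the apex of A, zb the apex of B.\<close>

definition even_apexed_frame :: "nat \<Rightarrow> 'a set \<Rightarrow> ('a \<Rightarrow> 'a \<Rightarrow> bool) \<Rightarrow> bool" where
  "even_apexed_frame l V E \<longleftrightarrow> even l \<and> 6 \<le> l \<and>
    (\<exists>(n::nat) (m::nat) (P :: nat \<Rightarrow> 'a list) (Q :: nat \<Rightarrow> 'a list) (R :: nat \<Rightarrow> nat \<Rightarrow> bool) za zb.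
       2 \<le> n \<and> 3 \<le> m + n \<and>
       (\<forall>i<n. length (P i) = (l div 2 - 2) + 1) \<and>
       (\<forall>j<m. length (Q j) = (l div 2 - 1) + 1) \<and>
       distinct (concat (map P [0..<n]) @ concat (map Q [0..<m]) @ [za, zb]) \<and>
       (\<forall>i<n. \<forall>i'<n. \<forall>j<m. \<forall>j'<m. i \<noteq> i' \<and> j \<noteq> j' \<longrightarrow>
          \<not> (R i j \<and> R i' j' \<and> \<not> R i j' \<and> \<not> R i' j)) \<and>
       (\<exists>i<n. \<forall>j<m. \<not> R i j) \<and>
       (\<exists>i<n. \<forall>j<m. R i j) \<and>
       V = {za, zb} \<union> (\<Union>i<n. set (P i)) \<union> (\<Union>j<m. set (Q j)) \<and>
       (\<forall>x y. E x y \<longleftrightarrow>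
          (\<exists>i<n. path_edge (P i) x y) \<or>
          (\<exists>j<m. path_edge (Q j) x y) \<or>
          (\<exists>j<m. \<exists>j'<m. j \<noteq> j' \<and> x = hd (Q j) \<and> y = hd (Q j')) \<or>
          (\<exists>j<m. \<exists>j'<m. j \<noteq> j' \<and> x = last (Q j) \<and> y = last (Q j')) \<or>
          (\<exists>i<n. \<exists>j<m. R i j \<and>
             ((x = hd (P i) \<and> y = hd (Q j)) \<or> (y = hd (P i) \<and> x = hd (Q j)))) \<or>
          (\<exists>i<n. \<exists>j<m. \<not> R i j \<and>
             ((x = last (P i) \<and> y = last (Q j)) \<or> (y = last (P i) \<and> x = last (Q j)))) \<or>
          (\<exists>w. ((x = za \<and> y = w) \<or> (y = za \<and> x = w)) \<and>
             w \<in> (\<lambda>i. hd (P i)) ` {..<n} \<union> (\<lambda>j. hd (Q j)) ` {..<m}) \<or>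
          (\<exists>w. ((x = zb \<and> y = w) \<or> (y = zb \<and> x = w)) \<and>
             w \<in> (\<lambda>i. last (P i)) ` {..<n} \<union> (\<lambda>j. last (Q j)) ` {..<m})))"

definition apexed_frame :: "nat \<Rightarrow> 'a set \<Rightarrow> ('a \<Rightarrow> 'a \<Rightarrow> bool) \<Rightarrow> bool" where
  "apexed_frame l V E \<longleftrightarrow> odd_apexed_frame l V E \<or> even_apexed_frame l V E"

end

theory Submission
  imports Defs
begin


lemma path_edge_sym: "path_edge P x y = path_edge P y x"
  unfolding path_edge_def by blast

lemma path_edge_Nil[simp]: "\<not> path_edge [] x y"
  unfolding path_edge_def by auto

lemma path_edge_Cons:
  "path_edge (a # xs) x y \<longleftrightarrow>
     (xs \<noteq> [] \<and> ((x = a \<and> y = hd xs) \<or> (y = a \<and> x = hd xs))) \<or> path_edge xs x y"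
proof
  assume "path_edge (a # xs) x y"
  then obtain j where j: "Suc j < length (a # xs)"
    "(x = (a#xs) ! j \<and> y = (a#xs) ! Suc j) \<or> (y = (a#xs) ! j \<and> x = (a#xs) ! Suc j)"
    unfolding path_edge_def by blast
  show "(xs \<noteq> [] \<and> ((x = a \<and> y = hd xs) \<or> (y = a \<and> x = hd xs))) \<or> path_edge xs x y"
  proof (cases j)
    case 0
    then show ?thesis using j by (cases xs) auto
  next
    case (Suc j')
    then have "path_edge xs x y" using j unfolding path_edge_def by auto
    then show ?thesis by blast
  qed
next
  assume "(xs \<noteq> [] \<and> ((x = a \<and> y = hd xs) \<or> (y = a \<and> x = hd xs))) \<or> path_edge xs x y"
  then show "path_edge (a # xs) x y"
  proof
    assume h: "xs \<noteq> [] \<and> ((x = a \<and> y = hd xs) \<or> (y = a \<and> x = hd xs))"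
    then show ?thesis unfolding path_edge_def
      by (rule_tac x=0 in exI) (cases xs, auto)
  next
    assume "path_edge xs x y"
    then obtain j where "Suc j < length xs"
      "(x = xs ! j \<and> y = xs ! Suc j) \<or> (y = xs ! j \<and> x = xs ! Suc j)"
      unfolding path_edge_def by blast
    then show ?thesis unfolding path_edge_def
      by (rule_tac x="Suc j" in exI) auto
  qed
qed

lemma path_edge_single[simp]: "\<not> path_edge [a] x y"
  by (simp add: path_edge_Cons)

lemma path_edge_append:
  assumes "xs \<noteq> []" "ys \<noteq> []"
  shows "path_edge (xs @ ys) x y \<longleftrightarrow> path_edge xs x y \<or> path_edge ys x y \<or>
     (x = last xs \<and> y = hd ys) \<or> (y = last xs \<and> x = hd ys)"
  using assms
proof (induction xs)
  case Nil then show ?case by simp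
next
  case (Cons a xs)
  show ?case
  proof (cases "xs = []")
    case True
    then show ?thesis using Cons.prems by (auto simp add: path_edge_Cons)
  next
    case False
    then show ?thesis using Cons.IH[OF False Cons.prems(2)]
      by (auto simp add: path_edge_Cons)
  qed
qed

lemma path_edge_rev[simp]: "path_edge (rev xs) x y = path_edge xs x y"
proof (induction xs)
  case Nil then show ?case by simp
next
  case (Cons a xs)
  show ?case
  proof (cases "xs = []")
    case True then show ?thesis by simp
  next
    case False
    then show ?thesis using Cons.IH
      by (auto simp add: path_edge_append path_edge_Cons hd_rev last_rev)
  qed
qed

lemma path_edge_set: "path_edge xs x y \<Longrightarrow> x \<in> set xs \<and> y \<in> set xs"
  unfolding path_edge_def by auto

lemma path_edge_irrefl: "distinct xs \<Longrightarrow> \<not> path_edge xs x x"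
  unfolding path_edge_def using nth_eq_iff_index_eq by fastforce

lemma path_edge_nth:
  assumes "distinct cs" "i < length cs" "j < length cs"
  shows "path_edge cs (cs ! i) (cs ! j) \<longleftrightarrow> (j = Suc i \<or> i = Suc j)"
proof
  assume "path_edge cs (cs ! i) (cs ! j)"
  then obtain t where t: "Suc t < length cs"
    "(cs ! i = cs ! t \<and> cs ! j = cs ! Suc t) \<or> (cs ! j = cs ! t \<and> cs ! i = cs ! Suc t)"
    unfolding path_edge_def by blast
  then show "j = Suc i \<or> i = Suc j"
    using assms nth_eq_iff_index_eq[OF assms(1)] by (metis Suc_lessD)
next
  assume "j = Suc i \<or> i = Suc j"
  then show "path_edge cs (cs ! i) (cs ! j)"
    unfolding path_edge_def using assms by blast
qed

lemma hole_intro: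
  assumes d: "distinct cs" and l4: "4 \<le> length cs" and sV: "set cs \<subseteq> V"
  and e: "\<And>x y. x \<in> set cs \<Longrightarrow> y \<in> set cs \<Longrightarrow>
      E x y \<longleftrightarrow> (path_edge cs x y \<or> (x = hd cs \<and> y = last cs) \<or> (y = hd cs \<and> x = last cs))"
  shows "is_hole V E cs"
  unfolding is_hole_def
proof (intro conjI allI impI l4 d sV)
  fix i j assume i: "i < length cs" and j: "j < length cs"
  have ne: "cs \<noteq> []" using l4 by auto
  have hd: "hd cs = cs ! 0" using ne by (simp add: hd_conv_nth)
  have lst: "last cs = cs ! (length cs - 1)" using ne by (simp add: last_conv_nth)
  have eq: "\<And>a b. a < length cs \<Longrightarrow> b < length cs \<Longrightarrow> cs ! a = cs ! b \<longleftrightarrow> a = b"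
    using nth_eq_iff_index_eq[OF d] by blast
  have "E (cs ! i) (cs ! j) \<longleftrightarrow> (j = Suc i \<or> i = Suc j) \<or>
      (i = 0 \<and> j = length cs - 1) \<or> (j = 0 \<and> i = length cs - 1)"
    using e[of "cs ! i" "cs ! j"] i j path_edge_nth[OF d i j] hd lst eq ne
    by (metis diff_less length_greater_0_conv nth_mem zero_less_one)
  also have "\<dots> \<longleftrightarrow> (j = Suc i mod length cs \<or> i = Suc j mod length cs)"
    using i j l4 by (auto simp add: mod_Suc)
  finally show "E (cs ! i) (cs ! j) \<longleftrightarrow> (j = Suc i mod length cs \<or> i = Suc j mod length cs)" .
qed




lemma thr_inst:
  assumes "threshold_on I R" "a \<in> I" "b \<in> I" "c \<in> I" "d \<in> I" "distinct [a, b, c, d]"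
  shows "\<not> (R a b \<and> R b c \<and> R c d \<and> \<not> R a c \<and> \<not> R b d \<and> \<not> R a d)"
    "\<not> (R a b \<and> R b c \<and> R c d \<and> R d a \<and> \<not> R a c \<and> \<not> R b d)"
    "\<not> (R a b \<and> R c d \<and> \<not> R a c \<and> \<not> R a d \<and> \<not> R b c \<and> \<not> R b d)"
proof -
  have h: "\<forall>a\<in>I. \<forall>b\<in>I. \<forall>c\<in>I. \<forall>d\<in>I. distinct [a, b, c, d] \<longrightarrow>
        \<not> (R a b \<and> R b c \<and> R c d \<and> \<not> R a c \<and> \<not> R b d \<and> \<not> R a d) \<and>
        \<not> (R a b \<and> R b c \<and> R c d \<and> R d a \<and> \<not> R a c \<and> \<not> R b d) \<and>
        \<not> (R a b \<and> R c d \<and> \<not> R a c \<and> \<not> R a d \<and> \<not> R b c \<and> \<not> R b d)"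
    using assms(1) unfolding threshold_on_def .
  note hh = h[rule_format, OF assms(2-6)]
  show "\<not> (R a b \<and> R b c \<and> R c d \<and> \<not> R a c \<and> \<not> R b d \<and> \<not> R a d)"
    using hh by (elim conjE)
  show "\<not> (R a b \<and> R b c \<and> R c d \<and> R d a \<and> \<not> R a c \<and> \<not> R b d)"
    using hh by (elim conjE)
  show "\<not> (R a b \<and> R c d \<and> \<not> R a c \<and> \<not> R a d \<and> \<not> R b c \<and> \<not> R b d)"
    using hh by (elim conjE)
qed

lemma common_nb:
  assumes th: "threshold_on I R" and c: "connected_on I R"
  and irr: "\<And>x y. R x y \<Longrightarrow> x \<in> I \<and> y \<in> I \<and> x \<noteq> y"
  and sy: "\<And>x y. R x y \<Longrightarrow> R y x"
  and x: "x \<in> I" and y: "y \<in> I" and xy: "x \<noteq> y" "\<not> R x y"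
  shows "\<exists>w\<in>I. R x w \<and> R w y"
proof -
  let ?r = "{(p, q). p \<in> I \<and> q \<in> I \<and> R p q}"
  have "(x, y) \<in> ?r\<^sup>*" using c x y unfolding connected_on_def by blast
  then have "y = x \<or> R x y \<or> (\<exists>w\<in>I. R x w \<and> R w y)"
  proof (induction rule: rtrancl_induct)
    case base then show ?case by simp
  next
    case (step y y')
    then have yy': "R y y'" "y \<in> I" "y' \<in> I" by auto
    show ?case
    proof (cases "y' = x \<or> R x y'")
      case True then show ?thesis by blast
    next
      case False
      then have n: "y' \<noteq> x" "\<not> R x y'" by auto
      from step.IH show ?thesis
      proof (elim disjE)
        assume "y = x" then show ?thesis using yy' n by blast
      next
        assume "R x y" then show ?thesis using yy' by blast
      next
        assume "\<exists>w\<in>I. R x w \<and> R w y"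
        then obtain w where w: "w \<in> I" "R x w" "R w y" by blast
        show ?thesis
        proof (cases "R w y'")
          case True then show ?thesis using w by blast
        next
          case False
          show ?thesis
          proof (cases "R x y \<or> y = x")
            case True then show ?thesis using yy' n by blast
          next
            case False2: False
            have d: "distinct [x, w, y, y']"
              using irr[OF w(2)] irr[OF w(3)] irr[OF yy'(1)] n False2 w False by auto
            have "\<not> (R x w \<and> R w y \<and> R y y' \<and> \<not> R x y \<and> \<not> R w y' \<and> \<not> R x y')"
              by (rule thr_inst(1)[OF th x w(1) yy'(2) yy'(3) d])
            then show ?thesis using w yy' False False2 n by blast
          qed
        qed
      qed
    qed
  qed
  then show ?thesis using xy by blast
qed


lemma nested:
  assumes th: "threshold_on I R"
  and irr: "\<And>x y. R x y \<Longrightarrow> x \<in> I \<and> y \<in> I \<and> x \<noteq> y"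
  and sy: "\<And>x y. R x y \<Longrightarrow> R y x"
  and x: "x \<in> I" and y: "y \<in> I"
  shows "(\<forall>a. R x a \<and> a \<noteq> y \<longrightarrow> R y a) \<or> (\<forall>b. R y b \<and> b \<noteq> x \<longrightarrow> R x b)"
proof (rule ccontr)
  assume "\<not> ?thesis"
  then obtain a b where a: "R x a" "a \<noteq> y" "\<not> R y a" and b: "R y b" "b \<noteq> x" "\<not> R x b"
    by blast
  have xy: "x \<noteq> y" using a by blast
  have ab: "a \<noteq> b" using a b by blast
  have I: "a \<in> I" "b \<in> I" using irr a b by auto
  have na: "x \<noteq> a" "y \<noteq> b" using irr a b by auto
  have ny: "\<not> R a y" "\<not> R b x" using sy a b by blast+
  show False
  proof (cases "R x y")
    case True
    show ?thesis
    proof (cases "R a b")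
      case True2: True
      have "distinct [x, a, b, y]" using xy ab na a b by auto
      then have "\<not> (R x a \<and> R a b \<and> R b y \<and> R y x \<and> \<not> R x b \<and> \<not> R a y)"
        by (rule thr_inst(2)[OF th x I(1) I(2) y])
      then show False using True True2 a b ny sy by blast
    next
      case False2: False
      have "distinct [a, x, y, b]" using xy ab na a b by auto
      then have "\<not> (R a x \<and> R x y \<and> R y b \<and> \<not> R a y \<and> \<not> R x b \<and> \<not> R a b)"
        by (rule thr_inst(1)[OF th I(1) x y I(2)])
      then show False using True False2 a b ny sy by blast
    qed
  next
    case False
    show ?thesis
    proof (cases "R a b")
      case True2: True
      have "distinct [x, a, b, y]" using xy ab na a b by auto
      then have "\<not> (R x a \<and> R a b \<and> R b y \<and> \<not> R x b \<and> \<not> R a y \<and> \<not> R x y)"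
        by (rule thr_inst(1)[OF th x I(1) I(2) y])
      then show False using False True2 a b ny sy by blast
    next
      case False2: False
      have "distinct [x, a, y, b]" using xy ab na a b by auto
      then have "\<not> (R x a \<and> R y b \<and> \<not> R x y \<and> \<not> R x b \<and> \<not> R a y \<and> \<not> R a b)"
        by (rule thr_inst(3)[OF th x I(1) y I(2)])
      then show False using False False2 a b ny sy by blast
    qed
  qed
qed


lemma dominating:
  assumes fin: "finite I" and ne: "I \<noteq> {}" and th: "threshold_on I R" and c: "connected_on I R"
  and irr: "\<And>x y. R x y \<Longrightarrow> x \<in> I \<and> y \<in> I \<and> x \<noteq> y"
  and sy: "\<And>x y. R x y \<Longrightarrow> R y x"
  shows "\<exists>v\<in>I. \<forall>w\<in>I. w \<noteq> v \<longrightarrow> R v w"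
proof -
  define N where "N v = {a \<in> I. R v a}" for v
  have finN: "finite (N v)" for v using fin unfolding N_def by auto
  obtain v0 where "v0 \<in> I" using ne by blast
  have bnd: "\<forall>y. y \<in> I \<longrightarrow> card (N y) \<le> card I" using fin unfolding N_def
    by (simp add: card_mono)
  obtain v where v: "v \<in> I" and vmax: "\<forall>y. y \<in> I \<longrightarrow> card (N y) \<le> card (N v)"
  proof -
    have b2: "\<forall>y. y \<in> I \<longrightarrow> card (N y) < Suc (card I)" using bnd by (simp add: le_imp_less_Suc)
    have "\<exists>x. x \<in> I \<and> (\<forall>y. y \<in> I \<longrightarrow> card (N y) \<le> card (N x))"
      by (rule Lattices_Big.ex_has_greatest_nat[where P="\<lambda>y. y \<in> I", OF \<open>v0 \<in> I\<close> b2])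
    then show ?thesis using that by blast
  qed
  have "\<forall>w\<in>I. w \<noteq> v \<longrightarrow> R v w"
  proof (intro ballI impI, rule ccontr)
    fix w assume w: "w \<in> I" "w \<noteq> v" "\<not> R v w"
    obtain c0 where c0: "c0 \<in> I" "R v c0" "R c0 w"
      using common_nb[OF th c irr sy v w(1) w(2)[symmetric] w(3)] by blast
    have "(\<forall>a. R v a \<and> a \<noteq> c0 \<longrightarrow> R c0 a) \<or> (\<forall>b. R c0 b \<and> b \<noteq> v \<longrightarrow> R v b)"
      using nested[OF th irr sy v c0(1)] .
    then have sub: "\<forall>a. R v a \<and> a \<noteq> c0 \<longrightarrow> R c0 a" using c0 w by blast
    have "insert v (insert w (N v - {c0})) \<subseteq> N c0"
      using sub c0 v w sy[OF c0(2)] unfolding N_def by blast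
    then have "card (insert v (insert w (N v - {c0}))) \<le> card (N c0)"
      using finN by (simp add: card_mono)
    moreover have "card (insert v (insert w (N v - {c0}))) = card (N v - {c0}) + 2"
    proof -
      have n1: "w \<notin> N v - {c0}" using w unfolding N_def by blast
      have n2: "v \<notin> insert w (N v - {c0})" using w irr[of v v] unfolding N_def by blast
      have f: "finite (N v - {c0})" using finN by blast
      show ?thesis using n1 n2 f by simp
    qed
    moreover have "card (N v - {c0}) + 1 = card (N v)"
    proof -
      have "c0 \<in> N v" using c0 unfolding N_def by blast
      then show ?thesis using card.remove[OF finN] by simp
    qed
    ultimately have "card (N c0) > card (N v)" by linarith
    then show False using vmax c0(1) by fastforce
  qed
  then show ?thesis using v by blast
qed


lemma compl_connected:
  assumes nc: "\<not> connected_on I RA"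
  and sy: "\<And>x y. RA x y \<Longrightarrow> RA y x"
  and RB: "\<And>x y. x \<in> I \<Longrightarrow> y \<in> I \<Longrightarrow> x \<noteq> y \<Longrightarrow> \<not> RA x y \<Longrightarrow> RB x y"
  shows "connected_on I RB"
  unfolding connected_on_def
proof (intro ballI)
  fix x y assume x: "x \<in> I" and y: "y \<in> I"
  let ?a = "{(p, q). p \<in> I \<and> q \<in> I \<and> RA p q}"
  let ?b = "{(p, q). p \<in> I \<and> q \<in> I \<and> RB p q}"
  have syma: "sym (?a\<^sup>*)" by (rule sym_rtrancl) (unfold sym_def, use sy in blast)
  obtain p q where pq: "p \<in> I" "q \<in> I" "(p, q) \<notin> ?a\<^sup>*" using nc unfolding connected_on_def by blast
  obtain w where w: "w \<in> I" "(x, w) \<notin> ?a\<^sup>*"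
  proof (cases "(x, p) \<in> ?a\<^sup>*")
    case True
    then have "(p, x) \<in> ?a\<^sup>*" using syma by (meson symD)
    then have "(x, q) \<notin> ?a\<^sup>*" using pq by (meson rtrancl_trans)
    then show ?thesis using that pq by blast
  next
    case False then show ?thesis using that pq by blast
  qed
  show "(x, y) \<in> ?b\<^sup>*"
  proof (cases "x = y")
    case True then show ?thesis by simp
  next
    case False
    show ?thesis
    proof (cases "RA x y")
      case False2: False
      then have "(x, y) \<in> ?b" using RB x y False by auto
      then show ?thesis by blast
    next
      case True
      have xy: "(x, y) \<in> ?a" using True x y by blast
      have "(y, w) \<notin> ?a\<^sup>*"
      proof
        assume "(y, w) \<in> ?a\<^sup>*"
        then have "(x, w) \<in> ?a\<^sup>*" using xy by (rule converse_rtrancl_into_rtrancl[rotated])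
        then show False using w by blast
      qed
      then have "w \<noteq> y" "\<not> RA y w" using w y by auto
      moreover have "w \<noteq> x" "\<not> RA x w" using w x by auto
      ultimately have "(x, w) \<in> ?b" "(w, y) \<in> ?b" using RB[of x w] RB[of w y] x y w sy[of w y] by auto
      then show ?thesis by (meson r_into_rtrancl rtrancl_trans)
    qed
  qed
qed




locale oddc =
  fixes k :: nat and P :: "nat \<Rightarrow> 'a list" and RA RB :: "nat \<Rightarrow> nat \<Rightarrow> bool"
    and z :: 'a and V :: "'a set" and E :: "'a \<Rightarrow> 'a \<Rightarrow> bool"
  assumes k3: "3 \<le> k"
  and len: "\<And>i. i < k \<Longrightarrow> 2 \<le> length (P i)"
  and dist: "\<And>i. i < k \<Longrightarrow> distinct (P i)"
  and own: "\<And>i j x. i < k \<Longrightarrow> j < k \<Longrightarrow> x \<in> set (P i) \<Longrightarrow> x \<in> set (P j) \<Longrightarrow> i = j"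
  and zP: "\<And>i. i < k \<Longrightarrow> z \<notin> set (P i)"
  and RAirr: "\<And>i j. RA i j \<Longrightarrow> i < k \<and> j < k \<and> i \<noteq> j"
  and RAsym: "\<And>i j. RA i j \<Longrightarrow> RA j i"
  and RB: "\<And>i j. RB i j \<longleftrightarrow> i < k \<and> j < k \<and> i \<noteq> j \<and> \<not> RA i j"
  and thB: "threshold_on {..<k} RB" and cB: "connected_on {..<k} RB"
  and V: "V = insert z (\<Union>i<k. set (P i))"
  and E: "\<And>x y. E x y \<longleftrightarrow> (\<exists>i<k. path_edge (P i) x y) \<or>
          (\<exists>i<k. \<exists>j<k. RA i j \<and> x = hd (P i) \<and> y = hd (P j)) \<or>
          (\<exists>i<k. \<exists>j<k. RB i j \<and> x = last (P i) \<and> y = last (P j)) \<or>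
          (\<exists>w. ((x = z \<and> y = w) \<or> (y = z \<and> x = w)) \<and> (\<exists>i<k. w = hd (P i)))"
begin

lemma ne: "i < k \<Longrightarrow> P i \<noteq> []" using len[of i] by auto
lemma hdP: "i < k \<Longrightarrow> hd (P i) \<in> set (P i)" using ne by simp
lemma lastP: "i < k \<Longrightarrow> last (P i) \<in> set (P i)" using ne by simp
lemma hd_last: "i < k \<Longrightarrow> hd (P i) \<noteq> last (P i)"
proof -
  assume i: "i < k"
  obtain a b xs where "P i = a # b # xs" using len[OF i]
    by (metis Suc_le_length_iff numeral_2_eq_2)
  then show ?thesis using dist[OF i] by (cases xs rule: rev_cases) auto
qed
lemma hd_own: "i < k \<Longrightarrow> j < k \<Longrightarrow> hd (P i) \<in> set (P j) \<Longrightarrow> i = j"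
  using own[of i j "hd (P i)"] hdP[of i] by blast
lemma last_own: "i < k \<Longrightarrow> j < k \<Longrightarrow> last (P i) \<in> set (P j) \<Longrightarrow> i = j"
  using own[of i j "last (P i)"] lastP[of i] by blast
lemma pe_own: "i < k \<Longrightarrow> j < k \<Longrightarrow> path_edge (P i) x y \<Longrightarrow> x \<in> set (P j) \<Longrightarrow> i = j"
  using own[of i j x] path_edge_set[of "P i" x y] by blast
lemma pe_own2: "i < k \<Longrightarrow> j < k \<Longrightarrow> path_edge (P i) x y \<Longrightarrow> y \<in> set (P j) \<Longrightarrow> i = j"
  using own[of i j y] path_edge_set[of "P i" x y] by blast
lemma zhd: "i < k \<Longrightarrow> hd (P i) \<noteq> z" using zP[of i] hdP[of i] by auto
lemma zlast: "i < k \<Longrightarrow> last (P i) \<noteq> z" using zP[of i] lastP[of i] by auto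

lemma RBsym: "RB i j \<Longrightarrow> RB j i" using RB[of i j] RB[of j i] RAsym[of j i] by blast
lemma RBirr: "\<And>x y. RB x y \<Longrightarrow> x \<in> {..<k} \<and> y \<in> {..<k} \<and> x \<noteq> y" using RB by auto

lemma E_pe: "s < k \<Longrightarrow> path_edge (P s) x y \<Longrightarrow> E x y" unfolding E by blast
lemma E_A: "RA s u \<Longrightarrow> E (hd (P s)) (hd (P u))" unfolding E using RAirr[of s u] by blast
lemma E_B: "RB s u \<Longrightarrow> E (last (P s)) (last (P u))" unfolding E using RB[of s u] by blast
lemma E_z1: "s < k \<Longrightarrow> E z (hd (P s))" unfolding E by blast
lemma E_z2: "s < k \<Longrightarrow> E (hd (P s)) z" unfolding E by blast

lemma H1:
  assumes ij: "RB i j"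
  shows "is_hole V E (z # P i @ rev (P j))"
proof -
  have i: "i < k" and j: "j < k" and ij': "i \<noteq> j" and nA: "\<not> RA i j"
    using ij unfolding RB by auto
  have nA2: "\<not> RA j i" using nA(1) RAsym by blast
  let ?cs = "z # P i @ rev (P j)"
  have dj: "set (P i) \<inter> set (P j) = {}" using own[OF i j] ij' by blast
  show ?thesis
  proof (rule hole_intro)
    show "distinct ?cs" using dist[OF i] dist[OF j] zP[OF i] zP[OF j] dj by auto
    show "4 \<le> length ?cs" using len[OF i] len[OF j] by simp
    show "set ?cs \<subseteq> V" using V i j by auto
    fix x y assume x: "x \<in> set ?cs" and y: "y \<in> set ?cs"
    have pe: "path_edge ?cs x y \<longleftrightarrow> ((x = z \<and> y = hd (P i)) \<or> (y = z \<and> x = hd (P i))) \<or>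
       path_edge (P i) x y \<or> path_edge (P j) x y \<or>
       (x = last (P i) \<and> y = last (P j)) \<or> (y = last (P i) \<and> x = last (P j))"
      using ne[OF i] ne[OF j] by (simp add: path_edge_Cons path_edge_append hd_rev)
    have hl: "hd ?cs = z" "last ?cs = hd (P j)" using ne[OF j] by (simp_all add: last_rev)
    have xs: "x = z \<or> x \<in> set (P i) \<or> x \<in> set (P j)" using x by auto
    have ys: "y = z \<or> y \<in> set (P i) \<or> y \<in> set (P j)" using y by auto
    let ?R = "(x = z \<and> y = hd (P i)) \<or> (y = z \<and> x = hd (P i)) \<or>
       path_edge (P i) x y \<or> path_edge (P j) x y \<or>
       (x = last (P i) \<and> y = last (P j)) \<or> (y = last (P i) \<and> x = last (P j)) \<or>
       (x = z \<and> y = hd (P j)) \<or> (y = z \<and> x = hd (P j))"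
    have main: "E x y \<longleftrightarrow> ?R"
    proof
      assume "E x y"
      then consider (p) s where "s < k" "path_edge (P s) x y"
        | (a) s t where "s < k" "t < k" "RA s t" "x = hd (P s)" "y = hd (P t)"
        | (b) s t where "s < k" "t < k" "RB s t" "x = last (P s)" "y = last (P t)"
        | (zz) s where "s < k" "(x = z \<and> y = hd (P s)) \<or> (y = z \<and> x = hd (P s))"
        unfolding E by blast
      then show ?R
      proof cases
        case p
        then have "x \<noteq> z" using zP[OF p(1)] path_edge_set[OF p(2)] by blast
        then show ?thesis using xs pe_own[OF p(1) i p(2)] pe_own[OF p(1) j p(2)] p by blast
      next
        case a
        have "s = i \<or> s = j" using xs a zhd[OF a(1)] hd_own[OF a(1) i] hd_own[OF a(1) j] by blast
        moreover have "t = i \<or> t = j" using ys a zhd[OF a(2)] hd_own[OF a(2) i] hd_own[OF a(2) j] by blast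
        ultimately show ?thesis using a nA nA2 RAirr[OF a(3)] by blast
      next
        case b
        have "s = i \<or> s = j" using xs b zlast[OF b(1)] last_own[OF b(1) i] last_own[OF b(1) j] by blast
        moreover have "t = i \<or> t = j" using ys b zlast[OF b(2)] last_own[OF b(2) i] last_own[OF b(2) j] by blast
        moreover have "s \<noteq> t" using RB[of s t] b(3) by blast
        ultimately show ?thesis using b by blast
      next
        case zz
        then show ?thesis using xs ys zhd[OF zz(1)] hd_own[OF zz(1) i] hd_own[OF zz(1) j] by blast
      qed
    next
      assume h: ?R
      have "RB j i" using RBsym ij by blast
      then show "E x y" unfolding E using h i j ij by blast
    qed
    show "E x y \<longleftrightarrow> (path_edge ?cs x y \<or> (x = hd ?cs \<and> y = last ?cs) \<or> (y = hd ?cs \<and> x = last ?cs))"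
      unfolding main pe hl by blast
  qed
qed


lemma H2:
  assumes ij: "RA i j" and it: "RB i t" and tj: "RB t j"
  shows "is_hole V E (P i @ last (P t) # rev (P j))"
proof -
  have i: "i < k" and j: "j < k" and ij': "i \<noteq> j" using RAirr[OF ij] by auto
  have t: "t < k" and ti: "t \<noteq> i" "t \<noteq> j" using it tj unfolding RB by auto
  have nBij: "\<not> RB i j" "\<not> RB j i" using ij RAsym[OF ij] unfolding RB by auto
  let ?cs = "P i @ last (P t) # rev (P j)"
  have dj: "set (P i) \<inter> set (P j) = {}" using own[OF i j] ij' by blast
  have bt: "last (P t) \<notin> set (P i)" "last (P t) \<notin> set (P j)"
    using last_own[OF t i] last_own[OF t j] ti by auto
  show ?thesis
  proof (rule hole_intro)
    show "distinct ?cs" using dist[OF i] dist[OF j] dj bt by auto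
    show "4 \<le> length ?cs" using len[OF i] len[OF j] by simp
    show "set ?cs \<subseteq> V" using V i j t lastP[OF t] by auto
    fix x y assume x: "x \<in> set ?cs" and y: "y \<in> set ?cs"
    have pe: "path_edge ?cs x y \<longleftrightarrow> path_edge (P i) x y \<or>
       (((x = last (P t) \<and> y = last (P j)) \<or> (y = last (P t) \<and> x = last (P j))) \<or> path_edge (P j) x y) \<or>
       (x = last (P i) \<and> y = last (P t)) \<or> (y = last (P i) \<and> x = last (P t))"
      using ne[OF i] ne[OF j] by (simp add: path_edge_Cons path_edge_append hd_rev)
    have hl: "hd ?cs = hd (P i)" "last ?cs = hd (P j)" using ne[OF i] ne[OF j] by (simp_all add: last_rev)
    have xs: "x \<in> set (P i) \<or> x = last (P t) \<or> x \<in> set (P j)" using x by auto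
    have ys: "y \<in> set (P i) \<or> y = last (P t) \<or> y \<in> set (P j)" using y by auto
    let ?R = "path_edge (P i) x y \<or> path_edge (P j) x y \<or>
       (x = last (P t) \<and> y = last (P j)) \<or> (y = last (P t) \<and> x = last (P j)) \<or>
       (x = last (P i) \<and> y = last (P t)) \<or> (y = last (P i) \<and> x = last (P t)) \<or>
       (x = hd (P i) \<and> y = hd (P j)) \<or> (y = hd (P i) \<and> x = hd (P j))"
    have main: "E x y \<longleftrightarrow> ?R"
    proof
      assume "E x y"
      then consider (p) s where "s < k" "path_edge (P s) x y"
        | (a) s u where "s < k" "u < k" "RA s u" "x = hd (P s)" "y = hd (P u)"
        | (b) s u where "s < k" "u < k" "RB s u" "x = last (P s)" "y = last (P u)"
        | (zz) s where "s < k" "(x = z \<and> y = hd (P s)) \<or> (y = z \<and> x = hd (P s))"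
        unfolding E by blast
      then show ?R
      proof cases
        case p
        have xP: "x \<in> set (P s)" "y \<in> set (P s)" using path_edge_set[OF p(2)] by auto
        have st: "s \<noteq> t"
        proof
          assume "s = t"
          then have xt: "x \<in> set (P t)" "y \<in> set (P t)" using xP by auto
          have "x \<notin> set (P i)" "x \<notin> set (P j)" "y \<notin> set (P i)" "y \<notin> set (P j)"
            using own[OF t i] own[OF t j] ti xt by blast+
          then have "x = last (P t)" "y = last (P t)" using xs ys by blast+
          then show False using p(2) path_edge_irrefl[OF dist[OF t]] \<open>s = t\<close> by simp
        qed
        have "x \<noteq> last (P t)" using own[OF p(1) t xP(1)] lastP[OF t] st by auto
        then have "x \<in> set (P i) \<or> x \<in> set (P j)" using xs by blast
        then have "s = i \<or> s = j" using own[OF p(1) i xP(1)] own[OF p(1) j xP(1)] by blast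
        then show ?thesis using p(2) by blast
      next
        case a
        have ht: "hd (P s) \<noteq> last (P t)" "hd (P u) \<noteq> last (P t)"
          using hd_last[OF t] hd_own[OF a(1) t] hd_own[OF a(2) t] lastP[OF t] by force+
        have "s = i \<or> s = j" using xs a ht hd_own[OF a(1) i] hd_own[OF a(1) j] by auto
        moreover have "u = i \<or> u = j" using ys a ht hd_own[OF a(2) i] hd_own[OF a(2) j] by auto
        moreover have "s \<noteq> u" using RAirr[OF a(3)] by blast
        ultimately show ?thesis using a by blast
      next
        case b
        have "s = i \<or> s = j \<or> s = t" using xs b last_own[OF b(1) i] last_own[OF b(1) j] last_own[OF b(1) t] lastP[OF t] by auto
        moreover have "u = i \<or> u = j \<or> u = t" using ys b last_own[OF b(2) i] last_own[OF b(2) j] last_own[OF b(2) t] lastP[OF t] by auto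
        moreover have "s \<noteq> u" using RB[of s u] b(3) by blast
        ultimately show ?thesis using b nBij by blast
      next
        case zz
        have "z \<notin> set ?cs" using zP[OF i] zP[OF j] zlast[OF t] by auto
        then show ?thesis using zz x y by blast
      qed
    next
      assume h: ?R
      show "E x y" using h E_pe[OF i] E_pe[OF j] E_B[OF it] E_B[OF tj] E_B[OF RBsym[OF it]] E_B[OF RBsym[OF tj]]
        E_A[OF ij] E_A[OF RAsym[OF ij]] by auto
    qed
    show "E x y \<longleftrightarrow> (path_edge ?cs x y \<or> (x = hd ?cs \<and> y = last ?cs) \<or> (y = hd ?cs \<and> x = last ?cs))"
      unfolding main pe hl by blast
  qed
qed


lemma nbB: "i < k \<Longrightarrow> \<exists>j. RB i j"
proof -
  assume i: "i < k"
  define y where "y = (if i = 0 then 1 else (0::nat))"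
  have y: "y < k" "y \<noteq> i" using k3 unfolding y_def by auto
  show ?thesis
  proof (cases "RB i y")
    case True then show ?thesis by blast
  next
    case False
    have "\<exists>w\<in>{..<k}. RB i w \<and> RB w y"
      by (rule common_nb[OF thB cB RBirr RBsym]) (use i y False in auto)
    then show ?thesis by blast
  qed
qed

lemma cnB: "i < k \<Longrightarrow> j < k \<Longrightarrow> i \<noteq> j \<Longrightarrow> \<not> RB i j \<Longrightarrow> \<exists>t. RB i t \<and> RB t j"
proof -
  assume "i < k" "j < k" "i \<noteq> j" "\<not> RB i j"
  then have "\<exists>w\<in>{..<k}. RB i w \<and> RB w j"
    by (intro common_nb[OF thB cB RBirr RBsym]) auto
  then show ?thesis by blast
qed

lemma hole_z: "i < k \<Longrightarrow> \<exists>cs. is_hole V E cs \<and> z \<in> set cs \<and> set (P i) \<subseteq> set cs"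
proof -
  assume i: "i < k"
  obtain j where "RB i j" using nbB[OF i] by blast
  then show ?thesis using H1 by (intro exI[of _ "z # P i @ rev (P j)"]) auto
qed

lemma odd_main:
  assumes u: "u \<in> V" and v: "v \<in> V"
  shows "\<exists>cs. is_hole V E cs \<and> u \<in> set cs \<and> v \<in> set cs"
proof -
  have k0: "0 < k" using k3 by auto
  have cover: "\<And>x. x \<in> V \<Longrightarrow> x \<noteq> z \<Longrightarrow> \<exists>i<k. x \<in> set (P i)" using V by auto
  show ?thesis
  proof (cases "u = z \<or> v = z")
    case True
    then obtain w where w: "w \<in> V" "{u, v} \<subseteq> {z, w}" using u v by blast
    obtain i where i: "i < k" "w = z \<or> w \<in> set (P i)"
      using cover[OF w(1)] k0 by blast
    obtain cs where "is_hole V E cs" "z \<in> set cs" "set (P i) \<subseteq> set cs" using hole_z[OF i(1)] by blast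
    then show ?thesis using w i by blast
  next
    case False
    obtain a where a: "a < k" "u \<in> set (P a)" using cover[OF u] False by blast
    obtain b where b: "b < k" "v \<in> set (P b)" using cover[OF v] False by blast
    show ?thesis
    proof (cases "a = b")
      case True
      obtain cs where "is_hole V E cs" "z \<in> set cs" "set (P a) \<subseteq> set cs" using hole_z[OF a(1)] by blast
      then show ?thesis using a b True by blast
    next
      case ab: False
      show ?thesis
      proof (cases "RB a b")
        case True
        then show ?thesis using H1[OF True] a b by (intro exI[of _ "z # P a @ rev (P b)"]) auto
      next
        case False
        obtain t where t: "RB a t" "RB t b" using cnB[OF a(1) b(1) ab False] by blast
        have "RA a b" using False a b ab unfolding RB by blast
        then show ?thesis using H2[OF _ t] a b by (intro exI[of _ "P a @ last (P t) # rev (P b)"]) auto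
      qed
    qed
  qed
qed

end


locale evc =
  fixes n m :: nat and P Q :: "nat \<Rightarrow> 'a list" and R :: "nat \<Rightarrow> nat \<Rightarrow> bool"
    and za zb :: 'a and V :: "'a set" and E :: "'a \<Rightarrow> 'a \<Rightarrow> bool"
  assumes n2: "2 \<le> n"
  and lenP: "\<And>i. i < n \<Longrightarrow> 2 \<le> length (P i)"
  and lenQ: "\<And>j. j < m \<Longrightarrow> 3 \<le> length (Q j)"
  and distP: "\<And>i. i < n \<Longrightarrow> distinct (P i)"
  and distQ: "\<And>j. j < m \<Longrightarrow> distinct (Q j)"
  and ownP: "\<And>i j x. i < n \<Longrightarrow> j < n \<Longrightarrow> x \<in> set (P i) \<Longrightarrow> x \<in> set (P j) \<Longrightarrow> i = j"
  and ownQ: "\<And>i j x. i < m \<Longrightarrow> j < m \<Longrightarrow> x \<in> set (Q i) \<Longrightarrow> x \<in> set (Q j) \<Longrightarrow> i = j"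
  and PQ: "\<And>i j x. i < n \<Longrightarrow> j < m \<Longrightarrow> x \<in> set (P i) \<Longrightarrow> x \<notin> set (Q j)"
  and zaP: "\<And>i. i < n \<Longrightarrow> za \<notin> set (P i)" and zbP: "\<And>i. i < n \<Longrightarrow> zb \<notin> set (P i)"
  and zaQ: "\<And>j. j < m \<Longrightarrow> za \<notin> set (Q j)" and zbQ: "\<And>j. j < m \<Longrightarrow> zb \<notin> set (Q j)"
  and zab: "za \<noteq> zb"
  and a0: "\<exists>i<n. \<forall>j<m. \<not> R i j"
  and b0: "\<exists>i<n. \<forall>j<m. R i j"
  and V: "V = {za, zb} \<union> (\<Union>i<n. set (P i)) \<union> (\<Union>j<m. set (Q j))"
  and E: "\<And>x y. E x y \<longleftrightarrow>
          (\<exists>i<n. path_edge (P i) x y) \<or>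
          (\<exists>j<m. path_edge (Q j) x y) \<or>
          (\<exists>j<m. \<exists>j'<m. j \<noteq> j' \<and> x = hd (Q j) \<and> y = hd (Q j')) \<or>
          (\<exists>j<m. \<exists>j'<m. j \<noteq> j' \<and> x = last (Q j) \<and> y = last (Q j')) \<or>
          (\<exists>i<n. \<exists>j<m. R i j \<and>
             ((x = hd (P i) \<and> y = hd (Q j)) \<or> (y = hd (P i) \<and> x = hd (Q j)))) \<or>
          (\<exists>i<n. \<exists>j<m. \<not> R i j \<and>
             ((x = last (P i) \<and> y = last (Q j)) \<or> (y = last (P i) \<and> x = last (Q j)))) \<or>
          (\<exists>w. ((x = za \<and> y = w) \<or> (y = za \<and> x = w)) \<and>
             w \<in> (\<lambda>i. hd (P i)) ` {..<n} \<union> (\<lambda>j. hd (Q j)) ` {..<m}) \<or>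
          (\<exists>w. ((x = zb \<and> y = w) \<or> (y = zb \<and> x = w)) \<and>
             w \<in> (\<lambda>i. last (P i)) ` {..<n} \<union> (\<lambda>j. last (Q j)) ` {..<m})"
begin

lemma neP: "i < n \<Longrightarrow> P i \<noteq> []" using lenP[of i] by auto
lemma neQ: "j < m \<Longrightarrow> Q j \<noteq> []" using lenQ[of j] by auto
lemma hdP: "i < n \<Longrightarrow> hd (P i) \<in> set (P i)" using neP by simp
lemma lastP: "i < n \<Longrightarrow> last (P i) \<in> set (P i)" using neP by simp
lemma hdQ: "j < m \<Longrightarrow> hd (Q j) \<in> set (Q j)" using neQ by simp
lemma lastQ: "j < m \<Longrightarrow> last (Q j) \<in> set (Q j)" using neQ by simp
lemma hd_lastP: "i < n \<Longrightarrow> hd (P i) \<noteq> last (P i)"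
proof -
  assume i: "i < n"
  obtain a b xs where "P i = a # b # xs" using lenP[OF i]
    by (metis Suc_le_length_iff numeral_2_eq_2)
  then show ?thesis using distP[OF i] by (cases xs rule: rev_cases) auto
qed
lemma hd_lastQ: "j < m \<Longrightarrow> hd (Q j) \<noteq> last (Q j)"
proof -
  assume j: "j < m"
  have "2 \<le> length (Q j)" using lenQ[OF j] by simp
  then obtain a b xs where "Q j = a # b # xs"
    by (metis Suc_le_length_iff numeral_2_eq_2)
  then show ?thesis using distQ[OF j] by (cases xs rule: rev_cases) auto
qed

lemma idx1[simp]: "i < n \<Longrightarrow> i' < n \<Longrightarrow> hd (P i) \<in> set (P i') \<longleftrightarrow> i = i'"
  using ownP[of i i' "hd (P i)"] hdP[of i] by blast
lemma idx2[simp]: "i < n \<Longrightarrow> i' < n \<Longrightarrow> last (P i) \<in> set (P i') \<longleftrightarrow> i = i'"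
  using ownP[of i i' "last (P i)"] lastP[of i] by blast
lemma idx3[simp]: "j < m \<Longrightarrow> j' < m \<Longrightarrow> hd (Q j) \<in> set (Q j') \<longleftrightarrow> j = j'"
  using ownQ[of j j' "hd (Q j)"] hdQ[of j] by blast
lemma idx4[simp]: "j < m \<Longrightarrow> j' < m \<Longrightarrow> last (Q j) \<in> set (Q j') \<longleftrightarrow> j = j'"
  using ownQ[of j j' "last (Q j)"] lastQ[of j] by blast
lemma idx5[simp]: "i < n \<Longrightarrow> j < m \<Longrightarrow> hd (P i) \<notin> set (Q j)"
  using PQ[of i j "hd (P i)"] hdP[of i] by blast
lemma idx6[simp]: "i < n \<Longrightarrow> j < m \<Longrightarrow> last (P i) \<notin> set (Q j)"
  using PQ[of i j "last (P i)"] lastP[of i] by blast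
lemma idx7[simp]: "i < n \<Longrightarrow> j < m \<Longrightarrow> hd (Q j) \<notin> set (P i)"
  using PQ[of i j "hd (Q j)"] hdQ[of j] by blast
lemma idx8[simp]: "i < n \<Longrightarrow> j < m \<Longrightarrow> last (Q j) \<notin> set (P i)"
  using PQ[of i j "last (Q j)"] lastQ[of j] by blast
lemma idx9[simp]: "i < n \<Longrightarrow> hd (P i) \<noteq> za" "i < n \<Longrightarrow> hd (P i) \<noteq> zb"
  "i < n \<Longrightarrow> last (P i) \<noteq> za" "i < n \<Longrightarrow> last (P i) \<noteq> zb"
  using hdP[of i] lastP[of i] zaP[of i] zbP[of i] by auto
lemma idx10[simp]: "j < m \<Longrightarrow> hd (Q j) \<noteq> za" "j < m \<Longrightarrow> hd (Q j) \<noteq> zb"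
  "j < m \<Longrightarrow> last (Q j) \<noteq> za" "j < m \<Longrightarrow> last (Q j) \<noteq> zb"
  using hdQ[of j] lastQ[of j] zaQ[of j] zbQ[of j] by auto
lemma idx11[simp]: "i < n \<Longrightarrow> za \<notin> set (P i)" "i < n \<Longrightarrow> zb \<notin> set (P i)"
  "j < m \<Longrightarrow> za \<notin> set (Q j)" "j < m \<Longrightarrow> zb \<notin> set (Q j)"
  "za \<noteq> zb" "zb \<noteq> za"
  using zaP zbP zaQ zbQ zab by auto

lemma sp1[simp]: "a < n \<Longrightarrow> b < n \<Longrightarrow> hd (P a) = hd (P b) \<longleftrightarrow> a = b"
  using ownP[of a b "hd (P a)"] hdP[of a] hdP[of b] by metis
lemma sp2[simp]: "a < n \<Longrightarrow> b < n \<Longrightarrow> hd (P a) \<noteq> last (P b)"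
  using ownP[of a b "hd (P a)"] hdP[of a] lastP[of b] hd_lastP[of a] by metis
lemma sp3[simp]: "a < n \<Longrightarrow> b < m \<Longrightarrow> hd (P a) \<noteq> hd (Q b)"
  using PQ[of a b "hd (P a)"] hdP[of a] hdQ[of b] by metis
lemma sp4[simp]: "a < n \<Longrightarrow> b < m \<Longrightarrow> hd (P a) \<noteq> last (Q b)"
  using PQ[of a b "hd (P a)"] hdP[of a] lastQ[of b] by metis
lemma sp5[simp]: "a < n \<Longrightarrow> b < n \<Longrightarrow> last (P a) \<noteq> hd (P b)"
  using ownP[of a b "last (P a)"] lastP[of a] hdP[of b] hd_lastP[of a] by metis
lemma sp6[simp]: "a < n \<Longrightarrow> b < n \<Longrightarrow> last (P a) = last (P b) \<longleftrightarrow> a = b"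
  using ownP[of a b "last (P a)"] lastP[of a] lastP[of b] by metis
lemma sp7[simp]: "a < n \<Longrightarrow> b < m \<Longrightarrow> last (P a) \<noteq> hd (Q b)"
  using PQ[of a b "last (P a)"] lastP[of a] hdQ[of b] by metis
lemma sp8[simp]: "a < n \<Longrightarrow> b < m \<Longrightarrow> last (P a) \<noteq> last (Q b)"
  using PQ[of a b "last (P a)"] lastP[of a] lastQ[of b] by metis
lemma sp9[simp]: "a < m \<Longrightarrow> b < n \<Longrightarrow> hd (Q a) \<noteq> hd (P b)"
  using PQ[of b a "hd (Q a)"] hdQ[of a] hdP[of b] by metis
lemma sp10[simp]: "a < m \<Longrightarrow> b < n \<Longrightarrow> hd (Q a) \<noteq> last (P b)"
  using PQ[of b a "hd (Q a)"] hdQ[of a] lastP[of b] by metis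
lemma sp11[simp]: "a < m \<Longrightarrow> b < m \<Longrightarrow> hd (Q a) = hd (Q b) \<longleftrightarrow> a = b"
  using ownQ[of a b "hd (Q a)"] hdQ[of a] hdQ[of b] by metis
lemma sp12[simp]: "a < m \<Longrightarrow> b < m \<Longrightarrow> hd (Q a) \<noteq> last (Q b)"
  using ownQ[of a b "hd (Q a)"] hdQ[of a] lastQ[of b] hd_lastQ[of a] by metis
lemma sp13[simp]: "a < m \<Longrightarrow> b < n \<Longrightarrow> last (Q a) \<noteq> hd (P b)"
  using PQ[of b a "last (Q a)"] lastQ[of a] hdP[of b] by metis
lemma sp14[simp]: "a < m \<Longrightarrow> b < n \<Longrightarrow> last (Q a) \<noteq> last (P b)"
  using PQ[of b a "last (Q a)"] lastQ[of a] lastP[of b] by metis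
lemma sp15[simp]: "a < m \<Longrightarrow> b < m \<Longrightarrow> last (Q a) \<noteq> hd (Q b)"
  using ownQ[of a b "last (Q a)"] lastQ[of a] hdQ[of b] hd_lastQ[of a] by metis
lemma sp16[simp]: "a < m \<Longrightarrow> b < m \<Longrightarrow> last (Q a) = last (Q b) \<longleftrightarrow> a = b"
  using ownQ[of a b "last (Q a)"] lastQ[of a] lastQ[of b] by metis
lemma sp17[simp]: "a < n \<Longrightarrow> za \<noteq> hd (P a)" "a < n \<Longrightarrow> zb \<noteq> hd (P a)"
  using hdP[of a] zaP[of a] zbP[of a] by metis+
lemma sp18[simp]: "a < n \<Longrightarrow> za \<noteq> last (P a)" "a < n \<Longrightarrow> zb \<noteq> last (P a)"
  using lastP[of a] zaP[of a] zbP[of a] by metis+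
lemma sp19[simp]: "a < m \<Longrightarrow> za \<noteq> hd (Q a)" "a < m \<Longrightarrow> zb \<noteq> hd (Q a)"
  using hdQ[of a] zaQ[of a] zbQ[of a] by metis+
lemma sp20[simp]: "a < m \<Longrightarrow> za \<noteq> last (Q a)" "a < m \<Longrightarrow> zb \<noteq> last (Q a)"
  using lastQ[of a] zaQ[of a] zbQ[of a] by metis+

lemma peP: "s < n \<Longrightarrow> path_edge (P s) x y \<Longrightarrow> x \<in> set (P s) \<and> y \<in> set (P s)"
  using path_edge_set by metis
lemma peQ: "s < m \<Longrightarrow> path_edge (Q s) x y \<Longrightarrow> x \<in> set (Q s) \<and> y \<in> set (Q s)"
  using path_edge_set by metis

lemma E_peP: "s < n \<Longrightarrow> path_edge (P s) x y \<Longrightarrow> E x y" unfolding E by (rule disjI1) blast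
lemma E_peQ: "s < m \<Longrightarrow> path_edge (Q s) x y \<Longrightarrow> E x y" unfolding E by (rule disjI2, rule disjI1) blast
lemma E_QQhd: "j < m \<Longrightarrow> j' < m \<Longrightarrow> j \<noteq> j' \<Longrightarrow> E (hd (Q j)) (hd (Q j'))"
  unfolding E by (rule disjI2, rule disjI2, rule disjI1) blast
lemma E_QQlast: "j < m \<Longrightarrow> j' < m \<Longrightarrow> j \<noteq> j' \<Longrightarrow> E (last (Q j)) (last (Q j'))"
  unfolding E by (rule disjI2, rule disjI2, rule disjI2, rule disjI1) blast
lemma E_PQhd: "i < n \<Longrightarrow> j < m \<Longrightarrow> R i j \<Longrightarrow> E (hd (P i)) (hd (Q j)) \<and> E (hd (Q j)) (hd (P i))"
  unfolding E by (rule conjI; (rule disjI2, rule disjI2, rule disjI2, rule disjI2, rule disjI1), blast)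
lemma E_PQlast: "i < n \<Longrightarrow> j < m \<Longrightarrow> \<not> R i j \<Longrightarrow> E (last (P i)) (last (Q j)) \<and> E (last (Q j)) (last (P i))"
  unfolding E by (rule conjI; (rule disjI2, rule disjI2, rule disjI2, rule disjI2, rule disjI2, rule disjI1), blast)
lemma E_zaP: "i < n \<Longrightarrow> E za (hd (P i)) \<and> E (hd (P i)) za"
  unfolding E by (rule conjI; (rule disjI2, rule disjI2, rule disjI2, rule disjI2, rule disjI2, rule disjI2, rule disjI1), blast)
lemma E_zaQ: "j < m \<Longrightarrow> E za (hd (Q j)) \<and> E (hd (Q j)) za"
  unfolding E by (rule conjI; (rule disjI2, rule disjI2, rule disjI2, rule disjI2, rule disjI2, rule disjI2, rule disjI1), blast)
lemma E_zbP: "i < n \<Longrightarrow> E zb (last (P i)) \<and> E (last (P i)) zb"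
  unfolding E by (rule conjI; (rule disjI2, rule disjI2, rule disjI2, rule disjI2, rule disjI2, rule disjI2, rule disjI2), blast)
lemma E_zbQ: "j < m \<Longrightarrow> E zb (last (Q j)) \<and> E (last (Q j)) zb"
  unfolding E by (rule conjI; (rule disjI2, rule disjI2, rule disjI2, rule disjI2, rule disjI2, rule disjI2, rule disjI2), blast)


lemma E_cases:
  assumes "E x y"
  obtains (pP) s where "s < n" "path_edge (P s) x y"
  | (pQ) s where "s < m" "path_edge (Q s) x y"
  | (qh) j j' where "j < m" "j' < m" "j \<noteq> j'" "x = hd (Q j)" "y = hd (Q j')"
  | (ql) j j' where "j < m" "j' < m" "j \<noteq> j'" "x = last (Q j)" "y = last (Q j')"
  | (rh) i j where "i < n" "j < m" "R i j" "(x = hd (P i) \<and> y = hd (Q j)) \<or> (y = hd (P i) \<and> x = hd (Q j))"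
  | (rl) i j where "i < n" "j < m" "\<not> R i j" "(x = last (P i) \<and> y = last (Q j)) \<or> (y = last (P i) \<and> x = last (Q j))"
  | (zaP) i where "i < n" "(x = za \<and> y = hd (P i)) \<or> (y = za \<and> x = hd (P i))"
  | (zaQ) j where "j < m" "(x = za \<and> y = hd (Q j)) \<or> (y = za \<and> x = hd (Q j))"
  | (zbP) i where "i < n" "(x = zb \<and> y = last (P i)) \<or> (y = zb \<and> x = last (P i))"
  | (zbQ) j where "j < m" "(x = zb \<and> y = last (Q j)) \<or> (y = zb \<and> x = last (Q j))"
proof -
  have "E x y" by fact
  then show thesis unfolding E
  proof (elim disjE)
    assume "\<exists>i<n. path_edge (P i) x y" then show thesis using pP by blast
  next
    assume "\<exists>j<m. path_edge (Q j) x y" then show thesis using pQ by blast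
  next
    assume "\<exists>j<m. \<exists>j'<m. j \<noteq> j' \<and> x = hd (Q j) \<and> y = hd (Q j')" then show thesis using qh by blast
  next
    assume "\<exists>j<m. \<exists>j'<m. j \<noteq> j' \<and> x = last (Q j) \<and> y = last (Q j')" then show thesis using ql by blast
  next
    assume "\<exists>i<n. \<exists>j<m. R i j \<and> ((x = hd (P i) \<and> y = hd (Q j)) \<or> (y = hd (P i) \<and> x = hd (Q j)))"
    then show thesis using rh by blast
  next
    assume "\<exists>i<n. \<exists>j<m. \<not> R i j \<and> ((x = last (P i) \<and> y = last (Q j)) \<or> (y = last (P i) \<and> x = last (Q j)))"
    then show thesis using rl by blast
  next
    assume "\<exists>w. ((x = za \<and> y = w) \<or> (y = za \<and> x = w)) \<and>
             w \<in> (\<lambda>i. hd (P i)) ` {..<n} \<union> (\<lambda>j. hd (Q j)) ` {..<m}"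
    then obtain w where w: "(x = za \<and> y = w) \<or> (y = za \<and> x = w)"
      "w \<in> (\<lambda>i. hd (P i)) ` {..<n} \<union> (\<lambda>j. hd (Q j)) ` {..<m}" by blast
    from w(2) show thesis
    proof (elim UnE imageE)
      fix i assume "w = hd (P i)" "i \<in> {..<n}" then show thesis using zaP w(1) by blast
    next
      fix j assume "w = hd (Q j)" "j \<in> {..<m}" then show thesis using zaQ w(1) by blast
    qed
  next
    assume "\<exists>w. ((x = zb \<and> y = w) \<or> (y = zb \<and> x = w)) \<and>
             w \<in> (\<lambda>i. last (P i)) ` {..<n} \<union> (\<lambda>j. last (Q j)) ` {..<m}"
    then obtain w where w: "(x = zb \<and> y = w) \<or> (y = zb \<and> x = w)"
      "w \<in> (\<lambda>i. last (P i)) ` {..<n} \<union> (\<lambda>j. last (Q j)) ` {..<m}" by blast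
    from w(2) show thesis
    proof (elim UnE imageE)
      fix i assume "w = last (P i)" "i \<in> {..<n}" then show thesis using zbP w(1) by blast
    next
      fix j assume "w = last (Q j)" "j \<in> {..<m}" then show thesis using zbQ w(1) by blast
    qed
  qed
qed

lemma peP_in: "s < n \<Longrightarrow> path_edge (P s) x y \<Longrightarrow> i < n \<Longrightarrow> x \<in> set (P i) \<Longrightarrow> path_edge (P i) x y"
  using ownP[of s i x] path_edge_set[of "P s" x y] by blast
lemma peQ_in: "s < m \<Longrightarrow> path_edge (Q s) x y \<Longrightarrow> j < m \<Longrightarrow> x \<in> set (Q j) \<Longrightarrow> path_edge (Q j) x y"
  using ownQ[of s j x] path_edge_set[of "Q s" x y] by blast
lemma peP_nQ: "s < n \<Longrightarrow> path_edge (P s) x y \<Longrightarrow> j < m \<Longrightarrow> x \<notin> set (Q j)"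
  using PQ[of s j x] path_edge_set[of "P s" x y] by blast
lemma peQ_nP: "s < m \<Longrightarrow> path_edge (Q s) x y \<Longrightarrow> i < n \<Longrightarrow> x \<notin> set (P i)"
  using PQ[of i s x] path_edge_set[of "Q s" x y] by blast
lemma peP_nz: "s < n \<Longrightarrow> path_edge (P s) x y \<Longrightarrow> x \<noteq> za \<and> x \<noteq> zb"
  using zaP[of s] zbP[of s] path_edge_set[of "P s" x y] by blast
lemma peQ_nz: "s < m \<Longrightarrow> path_edge (Q s) x y \<Longrightarrow> x \<noteq> za \<and> x \<noteq> zb"
  using zaQ[of s] zbQ[of s] path_edge_set[of "Q s" x y] by blast

lemma HPP:
  assumes i: "i < n" and i': "i' < n" and ii: "i \<noteq> i'"
  shows "is_hole V E (za # P i @ zb # rev (P i'))"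
proof -
  let ?cs = "za # P i @ zb # rev (P i')"
  have dj: "set (P i) \<inter> set (P i') = {}" using ownP[OF i i'] ii by blast
  show ?thesis
  proof (rule hole_intro)
    show "distinct ?cs" using distP[OF i] distP[OF i'] dj zaP[OF i] zaP[OF i'] zbP[OF i] zbP[OF i'] zab by auto
    show "4 \<le> length ?cs" using lenP[OF i] lenP[OF i'] by simp
    show "set ?cs \<subseteq> V" using V i i' by auto
    fix x y assume x: "x \<in> set ?cs" and y: "y \<in> set ?cs"
    have pe: "path_edge ?cs x y \<longleftrightarrow> ((x = za \<and> y = hd (P i)) \<or> (y = za \<and> x = hd (P i))) \<or>
       (path_edge (P i) x y \<or> (((x = zb \<and> y = last (P i')) \<or> (y = zb \<and> x = last (P i'))) \<or> path_edge (P i') x y) \<or>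
       ((x = last (P i) \<and> y = zb) \<or> (y = last (P i) \<and> x = zb)))"
      using neP[OF i] neP[OF i'] by (simp add: path_edge_Cons path_edge_append hd_rev)
    have hl: "hd ?cs = za" "last ?cs = hd (P i')" using neP[OF i'] by (simp_all add: last_rev)
    have xs: "x = za \<or> x = zb \<or> x \<in> set (P i) \<or> x \<in> set (P i')" using x by auto
    have ys: "y = za \<or> y = zb \<or> y \<in> set (P i) \<or> y \<in> set (P i')" using y by auto
    let ?R = "(x = za \<and> y = hd (P i)) \<or> (y = za \<and> x = hd (P i)) \<or>
       path_edge (P i) x y \<or> path_edge (P i') x y \<or>
       (x = zb \<and> y = last (P i')) \<or> (y = zb \<and> x = last (P i')) \<or>
       (x = last (P i) \<and> y = zb) \<or> (y = last (P i) \<and> x = zb) \<or>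
       (x = za \<and> y = hd (P i')) \<or> (y = za \<and> x = hd (P i'))"
    have main: "E x y \<longleftrightarrow> ?R"
    proof
      assume "E x y"
      then show ?R
      proof (cases rule: E_cases)
        case (pP s)
        then show ?thesis using xs peP_in[OF pP(1,2) i] peP_in[OF pP(1,2) i'] peP_nz[OF pP(1,2)] by blast
      next
        case (pQ s)
        then show ?thesis using xs peQ_nP[OF pQ(1,2) i] peQ_nP[OF pQ(1,2) i'] peQ_nz[OF pQ(1,2)] by blast
      next
        case (qh j j') then have False using xs i i' by auto then show ?thesis ..
      next
        case (ql j j') then have False using xs i i' by auto then show ?thesis ..
      next
        case (rh i0 j) then have False using xs ys i i' by auto then show ?thesis ..
      next
        case (rl i0 j) then have False using xs ys i i' by auto then show ?thesis ..
      next
        case (zaP i0)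
        then have "i0 = i \<or> i0 = i'" using xs ys i i' by auto
        then show ?thesis using zaP by blast
      next
        case (zaQ j) then have False using xs ys i i' by auto then show ?thesis ..
      next
        case (zbP i0)
        then have "i0 = i \<or> i0 = i'" using xs ys i i' by auto
        then show ?thesis using zbP by blast
      next
        case (zbQ j) then have False using xs ys i i' by auto then show ?thesis ..
      qed
    next
      assume h: ?R
      then show "E x y"
        using E_peP[OF i] E_peP[OF i'] E_zaP[OF i] E_zaP[OF i'] E_zbP[OF i] E_zbP[OF i'] by (elim disjE conjE) auto
    qed
    show "E x y \<longleftrightarrow> (path_edge ?cs x y \<or> (x = hd ?cs \<and> y = last ?cs) \<or> (y = hd ?cs \<and> x = last ?cs))"
      unfolding main pe hl by blast
  qed
qed


lemma HQQ:
  assumes j: "j < m" and j': "j' < m" and jj: "j \<noteq> j'"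
  shows "is_hole V E (Q j @ rev (Q j'))"
proof -
  let ?cs = "Q j @ rev (Q j')"
  show ?thesis
  proof (rule hole_intro)
    show "distinct ?cs" using distQ[OF j] distQ[OF j'] ownQ[OF j j'] jj by auto
    show "4 \<le> length ?cs" using lenQ[OF j] lenQ[OF j'] by simp
    show "set ?cs \<subseteq> V" using V j j' by auto
    fix x y assume x: "x \<in> set ?cs" and y: "y \<in> set ?cs"
    have pe: "path_edge ?cs x y \<longleftrightarrow> path_edge (Q j) x y \<or> path_edge (Q j') x y \<or> (x = last (Q j) \<and> y = last (Q j')) \<or> (y = last (Q j) \<and> x = last (Q j'))"
      using neQ[OF j] neQ[OF j'] by (auto simp add: path_edge_Cons path_edge_append hd_rev)
    have hl: "hd ?cs = hd (Q j)" "last ?cs = hd (Q j')" using neQ[OF j] neQ[OF j'] by (simp_all add: last_rev)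
    have xs: "x \<in> set (Q j) \<or> x \<in> set (Q j')" using x by auto
    have ys: "y \<in> set (Q j) \<or> y \<in> set (Q j')" using y by auto
    let ?R = "path_edge (Q j) x y \<or> path_edge (Q j') x y \<or> (x = last (Q j) \<and> y = last (Q j')) \<or> (y = last (Q j) \<and> x = last (Q j')) \<or> (x = hd (Q j) \<and> y = hd (Q j')) \<or> (y = hd (Q j) \<and> x = hd (Q j'))"
    have main: "E x y \<longleftrightarrow> ?R"
    proof
      assume "E x y"
      then show ?R
      proof (cases rule: E_cases)
        case (pP s)
        then show ?thesis using xs peP_nQ[OF pP(1,2) j] peP_nQ[OF pP(1,2) j'] by blast
      next
        case (pQ s)
        then show ?thesis using xs peQ_in[OF pQ(1,2) j] peQ_in[OF pQ(1,2) j'] by blast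
      next
        case (qh j0 j1)
        then have "(j0 = j \<or> j0 = j') \<and> (j1 = j \<or> j1 = j')" using xs ys j j' by auto
        then show ?thesis using qh by blast
      next
        case (ql j0 j1)
        then have "(j0 = j \<or> j0 = j') \<and> (j1 = j \<or> j1 = j')" using xs ys j j' by auto
        then show ?thesis using ql by blast
      next
        case (rh i0 j0)
        then have False using xs ys j j' by auto then show ?thesis ..
      next
        case (rl i0 j0)
        then have False using xs ys j j' by auto then show ?thesis ..
      next
        case (zaP i0)
        then have False using xs ys j j' by auto then show ?thesis ..
      next
        case (zaQ j0)
        then have False using xs ys j j' by auto then show ?thesis ..
      next
        case (zbP i0)
        then have False using xs ys j j' by auto then show ?thesis ..
      next
        case (zbQ j0)
        then have False using xs ys j j' by auto then show ?thesis ..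
      qed
    next
      assume h: ?R
      then show "E x y"
        using E_peQ[OF j] E_peQ[OF j'] E_QQhd[OF j j' jj] E_QQhd[OF j' j jj[symmetric]] E_QQlast[OF j j' jj] E_QQlast[OF j' j jj[symmetric]] by (elim disjE conjE) auto
    qed
    show "E x y \<longleftrightarrow> (path_edge ?cs x y \<or> (x = hd ?cs \<and> y = last ?cs) \<or> (y = hd ?cs \<and> x = last ?cs))"
      unfolding main pe hl by blast
  qed
qed

lemma HPQ1:
  assumes i: "i < n" and j: "j < m" and r: "R i j"
  shows "is_hole V E (P i @ zb # rev (Q j))"
proof -
  let ?cs = "P i @ zb # rev (Q j)"
  show ?thesis
  proof (rule hole_intro)
    show "distinct ?cs" using distP[OF i] distQ[OF j] PQ[OF i j] zbP[OF i] zbQ[OF j] by auto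
    show "4 \<le> length ?cs" using lenP[OF i] lenQ[OF j] by simp
    show "set ?cs \<subseteq> V" using V i j by auto
    fix x y assume x: "x \<in> set ?cs" and y: "y \<in> set ?cs"
    have pe: "path_edge ?cs x y \<longleftrightarrow> path_edge (P i) x y \<or> path_edge (Q j) x y \<or> (x = last (P i) \<and> y = zb) \<or> (y = last (P i) \<and> x = zb) \<or> (x = zb \<and> y = last (Q j)) \<or> (y = zb \<and> x = last (Q j))"
      using neP[OF i] neQ[OF j] by (auto simp add: path_edge_Cons path_edge_append hd_rev)
    have hl: "hd ?cs = hd (P i)" "last ?cs = hd (Q j)" using neP[OF i] neQ[OF j] by (simp_all add: last_rev)
    have xs: "x \<in> set (P i) \<or> x = zb \<or> x \<in> set (Q j)" using x by auto
    have ys: "y \<in> set (P i) \<or> y = zb \<or> y \<in> set (Q j)" using y by auto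
    let ?R = "path_edge (P i) x y \<or> path_edge (Q j) x y \<or> (x = last (P i) \<and> y = zb) \<or> (y = last (P i) \<and> x = zb) \<or> (x = zb \<and> y = last (Q j)) \<or> (y = zb \<and> x = last (Q j)) \<or> (x = hd (P i) \<and> y = hd (Q j)) \<or> (y = hd (P i) \<and> x = hd (Q j))"
    have main: "E x y \<longleftrightarrow> ?R"
    proof
      assume "E x y"
      then show ?R
      proof (cases rule: E_cases)
        case (pP s)
        then show ?thesis using xs peP_in[OF pP(1,2) i] peP_nQ[OF pP(1,2) j] peP_nz[OF pP(1,2)] by blast
      next
        case (pQ s)
        then show ?thesis using xs peQ_in[OF pQ(1,2) j] peQ_nP[OF pQ(1,2) i] peQ_nz[OF pQ(1,2)] by blast
      next
        case (qh j0 j1)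
        then have False using xs ys i j by auto then show ?thesis ..
      next
        case (ql j0 j1)
        then have False using xs ys i j by auto then show ?thesis ..
      next
        case (rh i0 j0)
        then have "i0 = i \<and> j0 = j" using xs ys i j by auto
        then show ?thesis using rh by blast
      next
        case (rl i0 j0)
        then have "i0 = i \<and> j0 = j" using xs ys i j by auto
        then show ?thesis using rl r by blast
      next
        case (zaP i0)
        then have False using xs ys i j by auto then show ?thesis ..
      next
        case (zaQ j0)
        then have False using xs ys i j by auto then show ?thesis ..
      next
        case (zbP i0)
        then have "i0 = i" using xs ys i j by auto
        then show ?thesis using zbP by blast
      next
        case (zbQ j0)
        then have "j0 = j" using xs ys i j by auto
        then show ?thesis using zbQ by blast
      qed
    next
      assume h: ?R
      then show "E x y"
        using E_peP[OF i] E_peQ[OF j] E_zbP[OF i] E_zbQ[OF j] E_PQhd[OF i j r] by (elim disjE conjE) auto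
    qed
    show "E x y \<longleftrightarrow> (path_edge ?cs x y \<or> (x = hd ?cs \<and> y = last ?cs) \<or> (y = hd ?cs \<and> x = last ?cs))"
      unfolding main pe hl by blast
  qed
qed

lemma HPQ2:
  assumes i: "i < n" and j: "j < m" and r: "\<not> R i j"
  shows "is_hole V E (za # Q j @ rev (P i))"
proof -
  let ?cs = "za # Q j @ rev (P i)"
  show ?thesis
  proof (rule hole_intro)
    show "distinct ?cs" using distP[OF i] distQ[OF j] PQ[OF i j] zaP[OF i] zaQ[OF j] by auto
    show "4 \<le> length ?cs" using lenP[OF i] lenQ[OF j] by simp
    show "set ?cs \<subseteq> V" using V i j by auto
    fix x y assume x: "x \<in> set ?cs" and y: "y \<in> set ?cs"
    have pe: "path_edge ?cs x y \<longleftrightarrow> path_edge (P i) x y \<or> path_edge (Q j) x y \<or> (x = za \<and> y = hd (Q j)) \<or> (y = za \<and> x = hd (Q j)) \<or> (x = last (Q j) \<and> y = last (P i)) \<or> (y = last (Q j) \<and> x = last (P i))"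
      using neP[OF i] neQ[OF j] by (auto simp add: path_edge_Cons path_edge_append hd_rev)
    have hl: "hd ?cs = za" "last ?cs = hd (P i)" using neP[OF i] neQ[OF j] by (simp_all add: last_rev)
    have xs: "x = za \<or> x \<in> set (P i) \<or> x \<in> set (Q j)" using x by auto
    have ys: "y = za \<or> y \<in> set (P i) \<or> y \<in> set (Q j)" using y by auto
    let ?R = "path_edge (P i) x y \<or> path_edge (Q j) x y \<or> (x = za \<and> y = hd (Q j)) \<or> (y = za \<and> x = hd (Q j)) \<or> (x = last (Q j) \<and> y = last (P i)) \<or> (y = last (Q j) \<and> x = last (P i)) \<or> (x = za \<and> y = hd (P i)) \<or> (y = za \<and> x = hd (P i))"
    have main: "E x y \<longleftrightarrow> ?R"
    proof
      assume "E x y"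
      then show ?R
      proof (cases rule: E_cases)
        case (pP s)
        then show ?thesis using xs peP_in[OF pP(1,2) i] peP_nQ[OF pP(1,2) j] peP_nz[OF pP(1,2)] by blast
      next
        case (pQ s)
        then show ?thesis using xs peQ_in[OF pQ(1,2) j] peQ_nP[OF pQ(1,2) i] peQ_nz[OF pQ(1,2)] by blast
      next
        case (qh j0 j1)
        then have False using xs ys i j by auto then show ?thesis ..
      next
        case (ql j0 j1)
        then have False using xs ys i j by auto then show ?thesis ..
      next
        case (rh i0 j0)
        then have "i0 = i \<and> j0 = j" using xs ys i j by auto
        then show ?thesis using rh r by blast
      next
        case (rl i0 j0)
        then have "i0 = i \<and> j0 = j" using xs ys i j by auto
        then show ?thesis using rl by blast
      next
        case (zaP i0)
        then have "i0 = i" using xs ys i j by auto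
        then show ?thesis using zaP by blast
      next
        case (zaQ j0)
        then have "j0 = j" using xs ys i j by auto
        then show ?thesis using zaQ by blast
      next
        case (zbP i0)
        then have False using xs ys i j by auto then show ?thesis ..
      next
        case (zbQ j0)
        then have False using xs ys i j by auto then show ?thesis ..
      qed
    next
      assume h: ?R
      then show "E x y"
        using E_peP[OF i] E_peQ[OF j] E_zaP[OF i] E_zaQ[OF j] E_PQlast[OF i j r] by (elim disjE conjE) auto
    qed
    show "E x y \<longleftrightarrow> (path_edge ?cs x y \<or> (x = hd ?cs \<and> y = last ?cs) \<or> (y = hd ?cs \<and> x = last ?cs))"
      unfolding main pe hl by blast
  qed
qed


lemma hole_P: "i < n \<Longrightarrow> \<exists>cs. is_hole V E cs \<and> za \<in> set cs \<and> zb \<in> set cs \<and> set (P i) \<subseteq> set cs"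
proof -
  assume i: "i < n"
  define i' where "i' = (if i = 0 then 1 else (0::nat))"
  have i': "i' < n" "i \<noteq> i'" using n2 i unfolding i'_def by auto
  show ?thesis using HPP[OF i i'(1,2)] by (intro exI[of _ "za # P i @ zb # rev (P i')"]) auto
qed

lemma hole_PP: "i < n \<Longrightarrow> i' < n \<Longrightarrow> \<exists>cs. is_hole V E cs \<and> set (P i) \<subseteq> set cs \<and> set (P i') \<subseteq> set cs"
proof (cases "i = i'")
  case True
  assume "i < n" then show ?thesis using hole_P True by blast
next
  case False
  assume "i < n" "i' < n"
  then show ?thesis using HPP[OF _ _ False] by (intro exI[of _ "za # P i @ zb # rev (P i')"]) auto
qed

lemma hole_zaQ: "j < m \<Longrightarrow> \<exists>cs. is_hole V E cs \<and> za \<in> set cs \<and> set (Q j) \<subseteq> set cs"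
proof -
  assume j: "j < m"
  obtain i where i: "i < n" "\<forall>j<m. \<not> R i j" using a0 by blast
  show ?thesis using HPQ2[OF i(1) j] i(2) j by (intro exI[of _ "za # Q j @ rev (P i)"]) auto
qed

lemma hole_zbQ: "j < m \<Longrightarrow> \<exists>cs. is_hole V E cs \<and> zb \<in> set cs \<and> set (Q j) \<subseteq> set cs"
proof -
  assume j: "j < m"
  obtain i where i: "i < n" "\<forall>j<m. R i j" using b0 by blast
  show ?thesis using HPQ1[OF i(1) j] i(2) j by (intro exI[of _ "P i @ zb # rev (Q j)"]) auto
qed

lemma hole_QQ: "j < m \<Longrightarrow> j' < m \<Longrightarrow> \<exists>cs. is_hole V E cs \<and> set (Q j) \<subseteq> set cs \<and> set (Q j') \<subseteq> set cs"
proof (cases "j = j'")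
  case True
  assume "j < m" then show ?thesis using hole_zaQ True by blast
next
  case False
  assume "j < m" "j' < m"
  then show ?thesis using HQQ[OF _ _ False] by (intro exI[of _ "Q j @ rev (Q j')"]) auto
qed

lemma hole_PQ: "i < n \<Longrightarrow> j < m \<Longrightarrow> \<exists>cs. is_hole V E cs \<and> set (P i) \<subseteq> set cs \<and> set (Q j) \<subseteq> set cs"
proof (cases "R i j")
  case True
  assume "i < n" "j < m"
  then show ?thesis using HPQ1[OF _ _ True] by (intro exI[of _ "P i @ zb # rev (Q j)"]) auto
next
  case False
  assume "i < n" "j < m"
  then show ?thesis using HPQ2[OF _ _ False] by (intro exI[of _ "za # Q j @ rev (P i)"]) auto
qed

lemma ev_cover: "x \<in> V \<Longrightarrow> x = za \<or> x = zb \<or> (\<exists>i<n. x \<in> set (P i)) \<or> (\<exists>j<m. x \<in> set (Q j))"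
  using V by auto

lemma ev_main1:
  assumes u: "u \<in> V" and v: "v \<in> V" and uz: "u = za \<or> u = zb \<or> (\<exists>i<n. u \<in> set (P i))"
  shows "\<exists>cs. is_hole V E cs \<and> u \<in> set cs \<and> v \<in> set cs"
proof -
  have n0: "0 < n" using n2 by auto
  from ev_cover[OF v] consider "v = za \<or> v = zb" | (p) i where "i < n" "v \<in> set (P i)"
    | (q) j where "j < m" "v \<in> set (Q j)" by blast
  then show ?thesis
  proof cases
    case 1
    from uz consider "u = za \<or> u = zb" | (p) i where "i < n" "u \<in> set (P i)" by blast
    then show ?thesis
    proof cases
      case 1
      then show ?thesis using hole_P[OF n0] 1 \<open>v = za \<or> v = zb\<close> by blast
    next
      case p
      then show ?thesis using hole_P[OF p(1)] \<open>v = za \<or> v = zb\<close> by blast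
    qed
  next
    case (p i)
    from uz consider "u = za \<or> u = zb" | (p') i' where "i' < n" "u \<in> set (P i')" by blast
    then show ?thesis
    proof cases
      case 1
      then show ?thesis using hole_P[OF p(1)] p by blast
    next
      case p'
      then show ?thesis using hole_PP[OF p'(1) p(1)] p by blast
    qed
  next
    case (q j)
    from uz consider "u = za" | "u = zb" | (p') i' where "i' < n" "u \<in> set (P i')" by blast
    then show ?thesis
    proof cases
      case 1
      then show ?thesis using hole_zaQ[OF q(1)] q by blast
    next
      case 2
      then show ?thesis using hole_zbQ[OF q(1)] q by blast
    next
      case p'
      then show ?thesis using hole_PQ[OF p'(1) q(1)] q by blast
    qed
  qed
qed

lemma ev_main:
  assumes u: "u \<in> V" and v: "v \<in> V"
  shows "\<exists>cs. is_hole V E cs \<and> u \<in> set cs \<and> v \<in> set cs"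
proof -
  from ev_cover[OF u] consider "u = za \<or> u = zb \<or> (\<exists>i<n. u \<in> set (P i))" | (q) j where "j < m" "u \<in> set (Q j)" by blast
  then show ?thesis
  proof cases
    case 1 then show ?thesis using ev_main1[OF u v] by blast
  next
    case q
    from ev_cover[OF v] consider "v = za \<or> v = zb \<or> (\<exists>i<n. v \<in> set (P i))" | (q') j' where "j' < m" "v \<in> set (Q j')" by blast
    then show ?thesis
    proof cases
      case 1 then show ?thesis using ev_main1[OF v u] by blast
    next
      case q'
      then show ?thesis using hole_QQ[OF q(1) q'(1)] q by blast
    qed
  qed
qed

end


lemma dcm:
  assumes "distinct (concat (map P [0..<k]))"
  shows "(\<forall>i<k. distinct (P i)) \<and> (\<forall>i<k. \<forall>j<k. \<forall>x. x \<in> set (P i) \<longrightarrow> x \<in> set (P j) \<longrightarrow> i = j)"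
  using assms
proof (induction k)
  case 0 then show ?case by simp
next
  case (Suc k)
  have d: "distinct (concat (map P [0..<k]))" "distinct (P k)"
    "set (concat (map P [0..<k])) \<inter> set (P k) = {}"
    using Suc.prems by auto
  have IH: "(\<forall>i<k. distinct (P i)) \<and> (\<forall>i<k. \<forall>j<k. \<forall>x. x \<in> set (P i) \<longrightarrow> x \<in> set (P j) \<longrightarrow> i = j)"
    using Suc.IH[OF d(1)] .
  have dj: "\<And>i x. i < k \<Longrightarrow> x \<in> set (P i) \<Longrightarrow> x \<notin> set (P k)"
  proof -
    fix i x assume "i < k" "x \<in> set (P i)"
    then have "x \<in> set (concat (map P [0..<k]))" by auto
    then show "x \<notin> set (P k)" using d(3) by blast
  qed
  show ?case
  proof (intro conjI allI impI)
    fix i assume "i < Suc k" then show "distinct (P i)" using IH d(2) less_Suc_eq by auto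
  next
    fix i j x assume "i < Suc k" "j < Suc k" "x \<in> set (P i)" "x \<in> set (P j)"
    then show "i = j" using IH dj less_Suc_eq by metis
  qed
qed

lemma conn_step:
  assumes "connected_on I R" "x \<in> I" "y \<in> I" "x \<noteq> y"
  shows "\<exists>w. R x w"
proof -
  have "(x, y) \<in> {(p, q). p \<in> I \<and> q \<in> I \<and> R p q}\<^sup>*" using assms unfolding connected_on_def by blast
  then show ?thesis using assms(4) by (cases rule: converse_rtranclE) auto
qed

lemma odd_case:
  assumes "odd_apexed_frame l V E" "u \<in> V" "v \<in> V"
  shows "\<exists>cs. is_hole V E cs \<and> u \<in> set cs \<and> v \<in> set cs"
proof -
  obtain k P RA RB z where
    l5: "5 \<le> l" and k3: "3 \<le> k" and len: "\<forall>i<k. length (P i) = (l - 3) div 2 + 1"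
    and dist: "distinct (concat (map P [0..<k]) @ [z])"
    and RAirr: "\<forall>i j. RA i j \<longrightarrow> i < k \<and> j < k \<and> i \<noteq> j"
    and RAsym: "\<forall>i j. RA i j \<longrightarrow> RA j i"
    and RB: "\<forall>i j. RB i j \<longleftrightarrow> i < k \<and> j < k \<and> i \<noteq> j \<and> \<not> RA i j"
    and thA: "threshold_on {..<k} RA" and thB: "threshold_on {..<k} RB"
    and V: "V = insert z (\<Union>i<k. set (P i))"
    and E: "\<forall>x y. E x y \<longleftrightarrow>
          (\<exists>i<k. path_edge (P i) x y) \<or>
          (\<exists>i<k. \<exists>j<k. RA i j \<and> x = hd (P i) \<and> y = hd (P j)) \<or>
          (\<exists>i<k. \<exists>j<k. RB i j \<and> x = last (P i) \<and> y = last (P j)) \<or>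
          (\<exists>w. ((x = z \<and> y = w) \<or> (y = z \<and> x = w)) \<and>
             ((\<not> connected_on {..<k} RA \<and> (\<exists>i<k. w = hd (P i))) \<or>
              (\<not> connected_on {..<k} RB \<and> (\<exists>i<k. w = last (P i)))))"
    using assms(1) unfolding odd_apexed_frame_def
    apply (elim conjE)
    apply (erule exE)+
    apply (elim conjE)
    apply (rule that)
    apply assumption+
    done
  have len2: "\<And>i. i < k \<Longrightarrow> 2 \<le> length (P i)" using len l5 by auto
  have dc: "distinct (concat (map P [0..<k]))" and zc: "z \<notin> set (concat (map P [0..<k]))"
    using dist by auto
  have dP: "\<And>i. i < k \<Longrightarrow> distinct (P i)" using dcm[OF dc] by blast
  have own: "\<And>i j x. i < k \<Longrightarrow> j < k \<Longrightarrow> x \<in> set (P i) \<Longrightarrow> x \<in> set (P j) \<Longrightarrow> i = j"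
    using dcm[OF dc] by blast
  have zP: "\<And>i. i < k \<Longrightarrow> z \<notin> set (P i)" using zc by auto
  have RAirr': "\<And>i j. RA i j \<Longrightarrow> i < k \<and> j < k \<and> i \<noteq> j" using RAirr by blast
  have RAsym': "\<And>i j. RA i j \<Longrightarrow> RA j i" using RAsym by blast
  have RB': "\<And>i j. RB i j \<longleftrightarrow> i < k \<and> j < k \<and> i \<noteq> j \<and> \<not> RA i j" using RB by blast
  have RBsym': "RB i j \<Longrightarrow> RB j i" for i j using RB'[of i j] RB'[of j i] RAsym'[of j i] by blast
  have RBirr': "\<And>i j. RB i j \<Longrightarrow> i \<in> {..<k} \<and> j \<in> {..<k} \<and> i \<noteq> j" using RB' by auto
  have RAirr'': "\<And>i j. RA i j \<Longrightarrow> i \<in> {..<k} \<and> j \<in> {..<k} \<and> i \<noteq> j" using RAirr' by auto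
  have RA': "RA i j \<longleftrightarrow> i < k \<and> j < k \<and> i \<noteq> j \<and> \<not> RB i j" for i j using RB'[of i j] RAirr'[of i j] by blast
  have k0: "0 < k" using k3 by auto
  consider (a) "\<not> connected_on {..<k} RA" "connected_on {..<k} RB"
    | (b) "connected_on {..<k} RA" "\<not> connected_on {..<k} RB"
  proof (cases "connected_on {..<k} RA")
    case True
    have "\<not> connected_on {..<k} RB"
    proof
      assume cB: "connected_on {..<k} RB"
      obtain w0 where w0: "w0 \<in> {..<k}" "\<forall>w\<in>{..<k}. w \<noteq> w0 \<longrightarrow> RA w0 w"
        using dominating[OF _ _ thA True RAirr'' RAsym'] k0 by blast
      define w1 where "w1 = (if w0 = 0 then 1 else (0::nat))"
      have w1: "w1 \<in> {..<k}" "w0 \<noteq> w1" using k3 unfolding w1_def by auto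
      obtain w where "RB w0 w" using conn_step[OF cB w0(1) w1] by blast
      then show False using w0 RB' by auto
    qed
    then show ?thesis using that True by blast
  next
    case False
    have "connected_on {..<k} RB"
      by (rule compl_connected[OF False RAsym']) (use RB' in auto)
    then show ?thesis using that False by blast
  qed
  then show ?thesis
  proof cases
    case a
    have E': "E x y \<longleftrightarrow> (\<exists>i<k. path_edge (P i) x y) \<or>
          (\<exists>i<k. \<exists>j<k. RA i j \<and> x = hd (P i) \<and> y = hd (P j)) \<or>
          (\<exists>i<k. \<exists>j<k. RB i j \<and> x = last (P i) \<and> y = last (P j)) \<or>
          (\<exists>w. ((x = z \<and> y = w) \<or> (y = z \<and> x = w)) \<and> (\<exists>i<k. w = hd (P i)))" for x y
      using E[rule_format, of x y] a by simp
    interpret oddc k P RA RB z V E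
    proof (unfold_locales)
      show "3 \<le> k" by fact
      show "\<And>i. i < k \<Longrightarrow> 2 \<le> length (P i)" by (rule len2)
      show "\<And>i. i < k \<Longrightarrow> distinct (P i)" by (rule dP)
      show "\<And>i j x. i < k \<Longrightarrow> j < k \<Longrightarrow> x \<in> set (P i) \<Longrightarrow> x \<in> set (P j) \<Longrightarrow> i = j" by (rule own)
      show "\<And>i. i < k \<Longrightarrow> z \<notin> set (P i)" by (rule zP)
      show "\<And>i j. RA i j \<Longrightarrow> i < k \<and> j < k \<and> i \<noteq> j" by (rule RAirr')
      show "\<And>i j. RA i j \<Longrightarrow> RA j i" by (rule RAsym')
      show "\<And>i j. RB i j \<longleftrightarrow> i < k \<and> j < k \<and> i \<noteq> j \<and> \<not> RA i j" by (rule RB')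
      show "threshold_on {..<k} RB" by fact
      show "connected_on {..<k} RB" using a by blast
      show "V = insert z (\<Union>i<k. set (P i))" by fact
      show "\<And>x y. E x y \<longleftrightarrow> (\<exists>i<k. path_edge (P i) x y) \<or>
          (\<exists>i<k. \<exists>j<k. RA i j \<and> x = hd (P i) \<and> y = hd (P j)) \<or>
          (\<exists>i<k. \<exists>j<k. RB i j \<and> x = last (P i) \<and> y = last (P j)) \<or>
          (\<exists>w. ((x = z \<and> y = w) \<or> (y = z \<and> x = w)) \<and> (\<exists>i<k. w = hd (P i)))" by (rule E')
    qed
    show ?thesis using odd_main[OF assms(2,3)] .
  next
    case b
    define P' where "P' = (\<lambda>i. rev (P i))"
    have E': "E x y \<longleftrightarrow> (\<exists>i<k. path_edge (P' i) x y) \<or>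
          (\<exists>i<k. \<exists>j<k. RB i j \<and> x = hd (P' i) \<and> y = hd (P' j)) \<or>
          (\<exists>i<k. \<exists>j<k. RA i j \<and> x = last (P' i) \<and> y = last (P' j)) \<or>
          (\<exists>w. ((x = z \<and> y = w) \<or> (y = z \<and> x = w)) \<and> (\<exists>i<k. w = hd (P' i)))" for x y
      unfolding P'_def hd_rev last_rev path_edge_rev using E[rule_format, of x y] b by (simp add: disj_commute disj_left_commute)
    interpret oddc k P' RB RA z V E
    proof (unfold_locales)
      show "3 \<le> k" by fact
      show "\<And>i. i < k \<Longrightarrow> 2 \<le> length (P' i)" using len2 unfolding P'_def by simp
      show "\<And>i. i < k \<Longrightarrow> distinct (P' i)" using dP unfolding P'_def by simp
      show "\<And>i j x. i < k \<Longrightarrow> j < k \<Longrightarrow> x \<in> set (P' i) \<Longrightarrow> x \<in> set (P' j) \<Longrightarrow> i = j"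
        using own unfolding P'_def by simp
      show "\<And>i. i < k \<Longrightarrow> z \<notin> set (P' i)" using zP unfolding P'_def by simp
      show "\<And>i j. RB i j \<Longrightarrow> i < k \<and> j < k \<and> i \<noteq> j" using RB' by simp
      show "\<And>i j. RB i j \<Longrightarrow> RB j i" by (rule RBsym')
      show "\<And>i j. RA i j \<longleftrightarrow> i < k \<and> j < k \<and> i \<noteq> j \<and> \<not> RB i j" by (rule RA')
      show "threshold_on {..<k} RA" by fact
      show "connected_on {..<k} RA" using b by blast
      show "V = insert z (\<Union>i<k. set (P' i))" using V unfolding P'_def by simp
      show "\<And>x y. E x y \<longleftrightarrow> (\<exists>i<k. path_edge (P' i) x y) \<or>
          (\<exists>i<k. \<exists>j<k. RB i j \<and> x = hd (P' i) \<and> y = hd (P' j)) \<or>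
          (\<exists>i<k. \<exists>j<k. RA i j \<and> x = last (P' i) \<and> y = last (P' j)) \<or>
          (\<exists>w. ((x = z \<and> y = w) \<or> (y = z \<and> x = w)) \<and> (\<exists>i<k. w = hd (P' i)))" by (rule E')
    qed
    show ?thesis using odd_main[OF assms(2,3)] .
  qed
qed

lemma even_case:
  assumes "even_apexed_frame l V E" "u \<in> V" "v \<in> V"
  shows "\<exists>cs. is_hole V E cs \<and> u \<in> set cs \<and> v \<in> set cs"
proof -
  obtain n m P Q R za zb where
    l6: "6 \<le> l" and n2: "2 \<le> n"
    and lenP: "\<forall>i<n. length (P i) = (l div 2 - 2) + 1"
    and lenQ: "\<forall>j<m. length (Q j) = (l div 2 - 1) + 1"
    and dist: "distinct (concat (map P [0..<n]) @ concat (map Q [0..<m]) @ [za, zb])"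
    and a0: "\<exists>i<n. \<forall>j<m. \<not> R i j" and b0: "\<exists>i<n. \<forall>j<m. R i j"
    and V: "V = {za, zb} \<union> (\<Union>i<n. set (P i)) \<union> (\<Union>j<m. set (Q j))"
    and E: "\<forall>x y. E x y \<longleftrightarrow>
          (\<exists>i<n. path_edge (P i) x y) \<or>
          (\<exists>j<m. path_edge (Q j) x y) \<or>
          (\<exists>j<m. \<exists>j'<m. j \<noteq> j' \<and> x = hd (Q j) \<and> y = hd (Q j')) \<or>
          (\<exists>j<m. \<exists>j'<m. j \<noteq> j' \<and> x = last (Q j) \<and> y = last (Q j')) \<or>
          (\<exists>i<n. \<exists>j<m. R i j \<and>
             ((x = hd (P i) \<and> y = hd (Q j)) \<or> (y = hd (P i) \<and> x = hd (Q j)))) \<or>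
          (\<exists>i<n. \<exists>j<m. \<not> R i j \<and>
             ((x = last (P i) \<and> y = last (Q j)) \<or> (y = last (P i) \<and> x = last (Q j)))) \<or>
          (\<exists>w. ((x = za \<and> y = w) \<or> (y = za \<and> x = w)) \<and>
             w \<in> (\<lambda>i. hd (P i)) ` {..<n} \<union> (\<lambda>j. hd (Q j)) ` {..<m}) \<or>
          (\<exists>w. ((x = zb \<and> y = w) \<or> (y = zb \<and> x = w)) \<and>
             w \<in> (\<lambda>i. last (P i)) ` {..<n} \<union> (\<lambda>j. last (Q j)) ` {..<m})"
    using assms(1) unfolding even_apexed_frame_def
    apply (elim conjE)
    apply (erule exE)+
    apply (elim conjE)
    apply (rule that)
    apply assumption+
    done
  have dcP: "distinct (concat (map P [0..<n]))" and dcQ: "distinct (concat (map Q [0..<m]))"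
    and PQd: "set (concat (map P [0..<n])) \<inter> set (concat (map Q [0..<m])) = {}"
    and zz: "za \<notin> set (concat (map P [0..<n]))" "zb \<notin> set (concat (map P [0..<n]))"
       "za \<notin> set (concat (map Q [0..<m]))" "zb \<notin> set (concat (map Q [0..<m]))" "za \<noteq> zb"
    using dist by auto
  interpret evc n m P Q R za zb V E
  proof (unfold_locales)
    show "2 \<le> n" by fact
    show "\<And>i. i < n \<Longrightarrow> 2 \<le> length (P i)" using lenP l6 by auto
    show "\<And>j. j < m \<Longrightarrow> 3 \<le> length (Q j)" using lenQ l6 by auto
    show "\<And>i. i < n \<Longrightarrow> distinct (P i)" using dcm[OF dcP] by blast
    show "\<And>j. j < m \<Longrightarrow> distinct (Q j)" using dcm[OF dcQ] by blast
    show "\<And>i j x. i < n \<Longrightarrow> j < n \<Longrightarrow> x \<in> set (P i) \<Longrightarrow> x \<in> set (P j) \<Longrightarrow> i = j" using dcm[OF dcP] by blast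
    show "\<And>i j x. i < m \<Longrightarrow> j < m \<Longrightarrow> x \<in> set (Q i) \<Longrightarrow> x \<in> set (Q j) \<Longrightarrow> i = j" using dcm[OF dcQ] by blast
    show "\<And>i j x. i < n \<Longrightarrow> j < m \<Longrightarrow> x \<in> set (P i) \<Longrightarrow> x \<notin> set (Q j)"
    proof -
      fix i j x assume "i < n" "j < m" "x \<in> set (P i)"
      then have "x \<in> set (concat (map P [0..<n]))" by auto
      moreover have "set (Q j) \<subseteq> set (concat (map Q [0..<m]))" using \<open>j < m\<close> by auto
      ultimately show "x \<notin> set (Q j)" using PQd by blast
    qed
    show "\<And>i. i < n \<Longrightarrow> za \<notin> set (P i)" using zz by auto
    show "\<And>i. i < n \<Longrightarrow> zb \<notin> set (P i)" using zz by auto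
    show "\<And>j. j < m \<Longrightarrow> za \<notin> set (Q j)" using zz by auto
    show "\<And>j. j < m \<Longrightarrow> zb \<notin> set (Q j)" using zz by auto
    show "za \<noteq> zb" by fact
    show "\<exists>i<n. \<forall>j<m. \<not> R i j" by fact
    show "\<exists>i<n. \<forall>j<m. R i j" by fact
    show "V = {za, zb} \<union> (\<Union>i<n. set (P i)) \<union> (\<Union>j<m. set (Q j))" by fact
  qed (rule E[rule_format])
  show ?thesis using ev_main[OF assms(2,3)] .
qed

theorem mainTheorem13:
  fixes l :: nat and V :: "'a set" and E :: "'a \<Rightarrow> 'a \<Rightarrow> bool" and u v :: 'a
  assumes "apexed_frame l V E" and "u \<in> V" and "v \<in> V"
  shows "\<exists>cs. is_hole V E cs \<and> u \<in> set cs \<and> v \<in> set cs"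
  using assms(1) odd_case[OF _ assms(2,3)] even_case[OF _ assms(2,3)] unfolding apexed_frame_def by blast


end
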